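(* Let $\Omega\subset\mathbb{P}(\mathbb{R}^{d+1})$ be a proper convex open set and $G\le\mathrm{Aut}(\Omega)$ a subgroup acting cocompactly on $\Omega$. Then $\mathrm{Ext}(\Omega)\subset\overline{G\cdot x}$ for every $x\in\Omega$. Moreover, if $G$ preserves no proper projective subspace of $\mathbb{P}(\mathbb{R}^{d+1})$, then $\mathrm{Ext}(\Omega)\subset\overline{G\cdot x}$ for every $x\in\overline\Omega$.
   Context: $\Omega$ is convex if $L\cap\Omega$ is connected and $\ne L$ for every projective line $L$, and proper if $\overline{L\cap\Omega}\ne L$ for every $L$. $\mathrm{Aut}(\Omega)=\{\varphi\in\mathrm{PGL}_{d+1}(\mathbb{R}):\varphi(\Omega)=\Omega\}$. The extreme points $\mathrm{Ext}(\Omega)$ are the points of $\partial\Omega$ not contained in the interior of a line segment (connected subset of a projective line) contained in $\partial\Omega$. Closures are taken in $\mathbb{P}(\mathbb{R}^{d+1})$. *)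

theory Defs
  imports "HOL-Analysis.Analysis"
begin

text \<open>Real projective space P(R^n), n = CARD('n) = d+1.  A point is a
  one-dimensional linear subspace (a line through 0) of R^n.\<close>

definition proj_points :: "(real^'n) set set" where
  "proj_points = {span {v} | v. v \<noteq> 0}"

definition proj_open :: "(real^'n) set set \<Rightarrow> bool" where
  "proj_open U \<longleftrightarrow> U \<subseteq> proj_points \<and> open {v. v \<noteq> 0 \<and> span {v} \<in> U}"

lemma istopology_proj_open: "istopology proj_open"
proof -
  have i: "{v. v \<noteq> 0 \<and> span {v} \<in> S \<inter> T} =
      {v. v \<noteq> 0 \<and> span {v} \<in> S} \<inter> {v. v \<noteq> 0 \<and> span {v} \<in> T}" for S T :: "(real^'n) set set"
    by auto
  have u: "{v. v \<noteq> 0 \<and> span {v} \<in> \<Union>K} = (\<Union>U\<in>K. {v. v \<noteq> 0 \<and> span {v} \<in> U})"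
    for K :: "(real^'n) set set set"
    by auto
  show ?thesis
    unfolding istopology_def proj_open_def
    by (auto simp only: i u intro!: open_Int open_UN)
qed

definition proj_top :: "(real^'n) set topology" where
  "proj_top = topology proj_open"

definition proj_lines :: "(real^'n) set set set" where
  "proj_lines = {{p \<in> proj_points. p \<subseteq> W} | W. subspace W \<and> dim W = 2}"

definition proj_convex :: "(real^'n) set set \<Rightarrow> bool" where
  "proj_convex \<Omega> \<longleftrightarrow> \<Omega> \<subseteq> proj_points \<and>
     (\<forall>L\<in>proj_lines. connectedin proj_top (L \<inter> \<Omega>) \<and> L \<inter> \<Omega> \<noteq> L)"

definition proj_proper :: "(real^'n) set set \<Rightarrow> bool" where
  "proj_proper \<Omega> \<longleftrightarrow> (\<forall>L\<in>proj_lines. proj_top closure_of (L \<inter> \<Omega>) \<noteq> L)"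

definition proj_act :: "real^'n^'n \<Rightarrow> (real^'n) set \<Rightarrow> (real^'n) set" where
  "proj_act A p = (\<lambda>v. A *v v) ` p"

text \<open>Subgroups of PGL_{d+1}(R) are represented by their full preimages in
  GL_{d+1}(R), i.e. subgroups of invertible matrices.\<close>

definition matrix_group :: "(real^'n^'n) set \<Rightarrow> bool" where
  "matrix_group G \<longleftrightarrow> (\<forall>A\<in>G. invertible A) \<and> mat 1 \<in> G \<and>
     (\<forall>A\<in>G. \<forall>B\<in>G. A ** B \<in> G) \<and> (\<forall>A\<in>G. matrix_inv A \<in> G)"

definition in_Aut :: "(real^'n^'n) set \<Rightarrow> (real^'n) set set \<Rightarrow> bool" where
  "in_Aut G \<Omega> \<longleftrightarrow> (\<forall>A\<in>G. invertible A \<and> proj_act A ` \<Omega> = \<Omega>)"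

definition orbit :: "(real^'n^'n) set \<Rightarrow> (real^'n) set \<Rightarrow> (real^'n) set set" where
  "orbit G x = {proj_act A x | A. A \<in> G}"

definition acts_cocompactly :: "(real^'n^'n) set \<Rightarrow> (real^'n) set set \<Rightarrow> bool" where
  "acts_cocompactly G \<Omega> \<longleftrightarrow>
     (\<exists>K. compactin proj_top K \<and> K \<subseteq> \<Omega> \<and> \<Omega> = (\<Union>A\<in>G. proj_act A ` K))"

definition proj_Ext :: "(real^'n) set set \<Rightarrow> (real^'n) set set" where
  "proj_Ext \<Omega> = {p \<in> proj_top frontier_of \<Omega>.
     \<not> (\<exists>L\<in>proj_lines. \<exists>S. S \<subseteq> L \<and> connectedin proj_top S \<and>
          S \<subseteq> proj_top frontier_of \<Omega> \<and> p \<in> (subtopology proj_top L) interior_of S)}"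

definition preserves_proper_subspace :: "(real^'n^'n) set \<Rightarrow> bool" where
  "preserves_proper_subspace G \<longleftrightarrow>
     (\<exists>W. subspace W \<and> W \<noteq> {0} \<and> W \<noteq> UNIV \<and> (\<forall>A\<in>G. (\<lambda>v. A *v v) ` W = W))"

end

theory Submission
  imports Defs
begin

lemma span1_eq:
  fixes u v :: "'a::real_vector"
  assumes "u \<noteq> 0" "v \<noteq> 0"
  shows "span {u} = span {v} \<longleftrightarrow> (\<exists>c. c \<noteq> 0 \<and> u = c *\<^sub>R v)"
proof
  assume h: "span {u} = span {v}"
  have "u \<in> span {v}" using h span_base[of u "{u}"] by auto
  then obtain c where c: "u = c *\<^sub>R v" by (auto simp: span_singleton scaleR_conv_of_real)
  with assms have "c \<noteq> 0" by auto
  with c show "\<exists>c. c \<noteq> 0 \<and> u = c *\<^sub>R v" by blast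
next
  assume "\<exists>c. c \<noteq> 0 \<and> u = c *\<^sub>R v"
  then obtain c where c: "c \<noteq> 0" "u = c *\<^sub>R v" by blast
  show "span {u} = span {v}"
    using c by (simp add: span_singleton image_def, safe, metis mult.commute scaleR_scaleR,
       metis (no_types, lifting) c(1) divide_inverse_commute inverse_eq_divide nonzero_eq_divide_eq scaleR_scaleR)
qed

lemma openin_proj_top: "openin proj_top U \<longleftrightarrow> proj_open U"
  by (simp add: proj_top_def istopology_proj_open)

lemma topspace_proj_top: "topspace proj_top = proj_points"
proof -
  have "proj_open proj_points"
  proof -
    have e: "{v. v \<noteq> 0 \<and> span {v} \<in> proj_points} = - {0}"
      by (auto simp: proj_points_def)
    show ?thesis unfolding proj_open_def e by (simp add: open_Compl)
  qed
  moreover have "U \<subseteq> proj_points" if "proj_open U" for U using that by (simp add: proj_open_def)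
  ultimately show ?thesis unfolding topspace_def openin_proj_top by blast
qed

lemma proj_points_iff: "p \<in> proj_points \<longleftrightarrow> (\<exists>v. v \<noteq> 0 \<and> p = span {v})"
  by (auto simp: proj_points_def)

lemma sat_open_mem:
  assumes "0 \<notin> Q" "\<And>v c. v \<in> Q \<Longrightarrow> c \<noteq> 0 \<Longrightarrow> c *\<^sub>R v \<in> Q" "v \<noteq> 0"
  shows "span {v} \<in> (\<lambda>v. span {v}) ` Q \<longleftrightarrow> v \<in> Q"
proof
  assume "span {v} \<in> (\<lambda>v. span {v}) ` Q"
  then obtain u where u: "u \<in> Q" "span {v} = span {u}" by auto
  have "u \<noteq> 0" using u assms(1) by auto
  then obtain c where "c \<noteq> 0" "v = c *\<^sub>R u" using span1_eq[OF assms(3), of u] u by auto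
  then show "v \<in> Q" using assms(2) u by auto
qed auto

lemma sat_open:
  fixes Q :: "(real^'n) set"
  assumes "open Q" "0 \<notin> Q" "\<And>v c. v \<in> Q \<Longrightarrow> c \<noteq> 0 \<Longrightarrow> c *\<^sub>R v \<in> Q"
  shows "openin proj_top ((\<lambda>v. span {v}) ` Q)"
proof -
  have "{v. v \<noteq> 0 \<and> span {v} \<in> (\<lambda>v. span {v}) ` Q} = Q"
    using sat_open_mem[OF assms(2,3)] assms(2) by auto
  moreover have "(\<lambda>v. span {v}) ` Q \<subseteq> proj_points"
    using assms(2) by (auto simp: proj_points_def)
  ultimately show ?thesis using assms(1) by (simp add: openin_proj_top proj_open_def)
qed

lemma closure_char:
  fixes v0 :: "real^'n"
  assumes "v0 \<noteq> 0"
  shows "span {v0} \<in> proj_top closure_of S \<longleftrightarrow> (\<forall>e>0. \<exists>u. u \<noteq> 0 \<and> span {u} \<in> S \<and> dist u v0 < e)"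
proof
  assume h: "span {v0} \<in> proj_top closure_of S"
  show "\<forall>e>0. \<exists>u. u \<noteq> 0 \<and> span {u} \<in> S \<and> dist u v0 < e"
  proof (intro allI impI)
    fix e :: real assume e: "e > 0"
    define Q where "Q = (\<Union>c\<in>{c. c \<noteq> 0}. ((\<lambda>v. c *\<^sub>R v) -` ball v0 e)) - {0}"
    have oQ: "open Q" unfolding Q_def
      by (intro open_Diff open_UN ballI continuous_open_vimage closed_singleton open_ball continuous_on_scaleR continuous_on_const continuous_on_id) (simp add: bounded_linear_scaleR_right linear_continuous_at)
    have sQ: "c *\<^sub>R v \<in> Q" if "v \<in> Q" "c \<noteq> 0" for v c
    proof -
      from that obtain d where "d \<noteq> 0" "d *\<^sub>R v \<in> ball v0 e" "v \<noteq> 0" unfolding Q_def by auto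
      then have "(d / c) *\<^sub>R (c *\<^sub>R v) \<in> ball v0 e" using that by simp
      moreover have "c *\<^sub>R v \<noteq> 0" using that \<open>v \<noteq> 0\<close> by simp
      ultimately show ?thesis unfolding Q_def using \<open>d \<noteq> 0\<close> that(2)
        by (intro DiffI UN_I[of "d/c"]) auto
    qed
    have "v0 \<in> Q" unfolding Q_def using e assms by (intro DiffI UN_I[of 1]) auto
    have op: "openin proj_top ((\<lambda>v. span {v}) ` Q)" by (rule sat_open[OF oQ _ sQ]) (auto simp: Q_def)
    define I where "I = (\<lambda>v. span {v}) ` Q"
    have mem: "span {v0} \<in> I" using \<open>v0 \<in> Q\<close> by (auto simp: I_def)
    have all: "\<forall>T. span {v0} \<in> T \<and> openin proj_top T \<longrightarrow> (\<exists>y\<in>S. y \<in> T)"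
      using h by (simp add: closure_of_def)
    have "span {v0} \<in> I \<and> openin proj_top I \<longrightarrow> (\<exists>y\<in>S. y \<in> I)" using all by (rule spec)
    then have "\<exists>y\<in>S. y \<in> I" using mem op unfolding I_def by blast
    then obtain y where "y \<in> S" "y \<in> (\<lambda>v. span {v}) ` Q" unfolding I_def by blast
    then obtain w where w: "w \<in> Q" "y = span {w}" by auto
    then obtain c where c: "c \<noteq> 0" "dist (c *\<^sub>R w) v0 < e" "w \<noteq> 0" unfolding Q_def by (auto simp: dist_commute)
    have "span {c *\<^sub>R w} = span {w}" using span1_eq[of "c *\<^sub>R w" w] c by auto
    then show "\<exists>u. u \<noteq> 0 \<and> span {u} \<in> S \<and> dist u v0 < e"
      using c w \<open>y \<in> S\<close> by (intro exI[of _ "c *\<^sub>R w"]) auto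
  qed
next
  assume h: "\<forall>e>0. \<exists>u. u \<noteq> 0 \<and> span {u} \<in> S \<and> dist u v0 < e"
  have tp: "span {v0} \<in> topspace proj_top" using assms by (auto simp: topspace_proj_top proj_points_def)
  show "span {v0} \<in> proj_top closure_of S"
    unfolding closure_of_def
  proof (intro CollectI conjI tp allI impI)
    fix T assume T: "span {v0} \<in> T \<and> openin proj_top T"
    then have "open {v. v \<noteq> 0 \<and> span {v} \<in> T}" by (simp add: openin_proj_top proj_open_def)
    moreover have "v0 \<in> {v. v \<noteq> 0 \<and> span {v} \<in> T}" using T assms by auto
    ultimately obtain e where e: "e > 0" "ball v0 e \<subseteq> {v. v \<noteq> 0 \<and> span {v} \<in> T}"
      using open_contains_ball by blast
    then obtain u where "u \<noteq> 0" "span {u} \<in> S" "dist u v0 < e" using h by blast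
    then have "u \<in> ball v0 e" by (simp add: dist_commute)
    then have "span {u} \<in> T" using e(2) by blast
    then show "\<exists>y\<in>S. y \<in> T" using \<open>span {u} \<in> S\<close> by blast
  qed
qed

definition ind :: "'a::real_vector \<Rightarrow> 'a \<Rightarrow> bool" where
  "ind x y \<longleftrightarrow> (\<forall>\<alpha> \<beta>. \<alpha> *\<^sub>R x + \<beta> *\<^sub>R y = 0 \<longrightarrow> \<alpha> = 0 \<and> \<beta> = 0)"

lemma ind_nz: "ind x y \<Longrightarrow> x \<noteq> 0 \<and> y \<noteq> 0"
  unfolding ind_def by (metis add.right_neutral add_0 one_neq_zero scaleR_one scaleR_zero_left)

lemma not_ind:
  assumes "\<not> ind x y" "x \<noteq> 0" "y \<noteq> 0"
  obtains c where "c \<noteq> 0" "y = c *\<^sub>R x"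
proof -
  from assms obtain \<alpha> \<beta> where ab: "\<alpha> *\<^sub>R x + \<beta> *\<^sub>R y = 0" "\<alpha> \<noteq> 0 \<or> \<beta> \<noteq> 0" unfolding ind_def by blast
  have "\<beta> \<noteq> 0" using ab assms(2) by auto
  then have "y = (- \<alpha> / \<beta>) *\<^sub>R x" using ab(1)
    by (metis (no_types, lifting) add.commute add_uminus_conv_diff diff_0 divide_inverse eq_neg_iff_add_eq_0 mult.commute scaleR_minus_left scaleR_scaleR scaleR_right.minus scaleR_left.minus nonzero_divide_eq_eq
       real_vector.scale_left_imp_eq scale_eq_0_iff)
  moreover have "- \<alpha> / \<beta> \<noteq> 0" using ab assms by (metis calculation scale_zero_left)
  ultimately show ?thesis using that by blast
qed

lemma span2: "span {x, y} = {\<alpha> *\<^sub>R x + \<beta> *\<^sub>R y | \<alpha> \<beta>. True}"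
proof
  show "span {x, y} \<subseteq> {\<alpha> *\<^sub>R x + \<beta> *\<^sub>R y | \<alpha> \<beta>. True}"
  proof
    fix z assume "z \<in> span {x, y}"
    then obtain k where "z - k *\<^sub>R x \<in> span {y}" by (auto simp: span_insert)
    then obtain m where "z - k *\<^sub>R x = m *\<^sub>R y" by (auto simp: span_singleton scaleR_conv_of_real)
    then have "z = k *\<^sub>R x + m *\<^sub>R y" by (simp add: algebra_simps)
    then show "z \<in> {\<alpha> *\<^sub>R x + \<beta> *\<^sub>R y | \<alpha> \<beta>. True}" by blast
  qed
next
  show "{\<alpha> *\<^sub>R x + \<beta> *\<^sub>R y | \<alpha> \<beta>. True} \<subseteq> span {x, y}"
  proof
    fix z assume "z \<in> {\<alpha> *\<^sub>R x + \<beta> *\<^sub>R y | \<alpha> \<beta>. True}"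
    then obtain \<alpha> \<beta> where z: "z = \<alpha> *\<^sub>R x + \<beta> *\<^sub>R y" by blast
    have "x \<in> span {x, y}" "y \<in> span {x, y}" by (auto intro: span_base)
    then show "z \<in> span {x, y}" unfolding z by (intro span_add span_scale)
  qed
qed

lemma in_span2: "z \<in> span {x, y} \<longleftrightarrow> (\<exists>\<alpha> \<beta>. z = \<alpha> *\<^sub>R x + \<beta> *\<^sub>R y)"
  by (simp add: span2)

definition line_of :: "'a::real_vector \<Rightarrow> 'a \<Rightarrow> 'a set set" where
  "line_of a b = {p \<in> {span {v} | v. v \<noteq> 0}. p \<subseteq> span {a, b}}"

lemma dim_span2: "ind a b \<Longrightarrow> dim (span {a::real^'n, b}) = 2"
proof -
  assume h: "ind a b"
  have nz: "a \<noteq> 0" "b \<noteq> 0" using ind_nz[OF h] by auto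
  have "a \<noteq> b" using h unfolding ind_def by (metis add.inverse_neutral add_uminus_conv_diff diff_self nz(1) scaleR_minus_left scaleR_one zero_neq_neg_one)
  have "a \<notin> span {b}"
  proof
    assume "a \<in> span {b}"
    then obtain k where "a = k *\<^sub>R b" by (auto simp: span_singleton scaleR_conv_of_real)
    then have "1 *\<^sub>R a + (- k) *\<^sub>R b = 0" by simp
    then show False using h unfolding ind_def by fastforce
  qed
  then have "independent {a, b}" using nz by (simp add: independent_insert)
  then show ?thesis using \<open>a \<noteq> b\<close> by (simp add: dim_eq_card_independent)
qed

lemma line_of_lines: "ind a b \<Longrightarrow> line_of (a::real^'n) b \<in> proj_lines"
  unfolding proj_lines_def line_of_def proj_points_def
  by (rule CollectI, rule exI[of _ "span {a, b}"]) (metis (no_types, lifting) dim_span2 subspace_span)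

lemma mem_line_of: "u \<noteq> 0 \<Longrightarrow> span {u} \<in> line_of a b \<longleftrightarrow> u \<in> span {a, b}"
proof -
  assume "u \<noteq> 0"
  have "span {u} \<subseteq> span {a, b}" if "u \<in> span {a, b}" using that by (intro span_minimal) auto
  then show ?thesis unfolding line_of_def using \<open>u \<noteq> 0\<close> by (auto intro: span_base)
qed

lemma line_of_elem: "p \<in> line_of a b \<Longrightarrow> \<exists>u. u \<noteq> 0 \<and> p = span {u} \<and> u \<in> span {a, b}"
  unfolding line_of_def by (auto intro: span_base)

lemma line_of_sub: "line_of a b \<subseteq> proj_points"
  unfolding line_of_def proj_points_def by auto

lemma dual2:
  fixes x y :: "real^'n"
  assumes "ind x y"
  obtains f g where "linear f" "linear g" "continuous_on UNIV f" "continuous_on UNIV g"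
    "\<And>\<alpha> \<beta>. f (\<alpha> *\<^sub>R x + \<beta> *\<^sub>R y) = \<alpha>" "\<And>\<alpha> \<beta>. g (\<alpha> *\<^sub>R x + \<beta> *\<^sub>R y) = \<beta>"
proof -
  define D where "D = (x \<bullet> x) * (y \<bullet> y) - (x \<bullet> y)^2"
  have "D \<noteq> 0"
  proof
    assume D0: "D = 0"
    define w where "w = (y \<bullet> y) *\<^sub>R x + (- (x \<bullet> y)) *\<^sub>R y"
    have "w \<bullet> w = (y \<bullet> y) * D"
      unfolding w_def D_def by (simp add: inner_add_left inner_add_right inner_commute algebra_simps power2_eq_square)
    then have "w = 0" using D0 by simp
    then have "y \<bullet> y = 0" using assms unfolding ind_def w_def by blast
    then show False using ind_nz[OF assms] by simp
  qed
  define f where "f u = ((y \<bullet> y) * (x \<bullet> u) - (x \<bullet> y) * (y \<bullet> u)) / D" for u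
  define g where "g u = ((x \<bullet> x) * (y \<bullet> u) - (x \<bullet> y) * (x \<bullet> u)) / D" for u
  have lf: "linear f" unfolding f_def
    by (rule linearI) (simp_all add: inner_add_right algebra_simps add_divide_distrib diff_divide_distrib)
  have lg: "linear g" unfolding g_def
    by (rule linearI) (simp_all add: inner_add_right algebra_simps add_divide_distrib diff_divide_distrib)
  have cf: "continuous_on UNIV f" unfolding f_def using \<open>D \<noteq> 0\<close> by (intro continuous_intros) auto
  have cg: "continuous_on UNIV g" unfolding g_def using \<open>D \<noteq> 0\<close> by (intro continuous_intros) auto
  have ef: "f (\<alpha> *\<^sub>R x + \<beta> *\<^sub>R y) = \<alpha>" for \<alpha> \<beta>
  proof -
    have "(y \<bullet> y) * (x \<bullet> (\<alpha> *\<^sub>R x + \<beta> *\<^sub>R y)) - (x \<bullet> y) * (y \<bullet> (\<alpha> *\<^sub>R x + \<beta> *\<^sub>R y)) = \<alpha> * D"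
      unfolding D_def by (simp add: inner_add_right inner_commute algebra_simps power2_eq_square)
    then show ?thesis unfolding f_def using \<open>D \<noteq> 0\<close> by simp
  qed
  have eg: "g (\<alpha> *\<^sub>R x + \<beta> *\<^sub>R y) = \<beta>" for \<alpha> \<beta>
  proof -
    have "(x \<bullet> x) * (y \<bullet> (\<alpha> *\<^sub>R x + \<beta> *\<^sub>R y)) - (x \<bullet> y) * (x \<bullet> (\<alpha> *\<^sub>R x + \<beta> *\<^sub>R y)) = \<beta> * D"
      unfolding D_def by (simp add: inner_add_right inner_commute algebra_simps power2_eq_square)
    then show ?thesis unfolding g_def using \<open>D \<noteq> 0\<close> by simp
  qed
  show ?thesis using that[OF lf lg cf cg ef eg] .
qed

locale pc =
  fixes \<Omega> :: "(real^'n) set set"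
  assumes opn: "openin proj_top \<Omega>" and cvx: "proj_convex \<Omega>" and prp: "proj_proper \<Omega>"
begin

definition C :: "(real^'n) set" where "C = {v. v \<noteq> 0 \<and> span {v} \<in> \<Omega>}"

lemma C_open: "open C"
  using opn unfolding openin_proj_top proj_open_def C_def by simp

lemma C_nz: "v \<in> C \<Longrightarrow> v \<noteq> 0" by (simp add: C_def)

lemma C_scale: assumes "v \<in> C" "c \<noteq> 0" shows "c *\<^sub>R v \<in> C"
proof -
  have "span {c *\<^sub>R v} = span {v}" using span1_eq[of "c *\<^sub>R v" v] assms C_nz by auto
  then show ?thesis using assms by (simp add: C_def)
qed

lemma C_neg: "v \<in> C \<Longrightarrow> - v \<in> C"
  using C_scale[of v "-1"] by simp

lemma C_iff: "v \<noteq> 0 \<Longrightarrow> span {v} \<in> \<Omega> \<longleftrightarrow> v \<in> C" by (simp add: C_def)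

definition sg :: "real^'n \<Rightarrow> real^'n \<Rightarrow> bool" where
  "sg a b \<longleftrightarrow> (\<forall>t\<in>{0..1::real}. (1 - t) *\<^sub>R a + t *\<^sub>R b \<in> C)"

lemma sg_ends: "sg a b \<Longrightarrow> a \<in> C \<and> b \<in> C"
  unfolding sg_def by (metis atLeastAtMost_iff diff_zero scaleR_one scaleR_zero_left add_0 add.right_neutral cancel_comm_monoid_add_class.diff_cancel order_refl zero_le_one)

lemma pos_comb:
  assumes "sg a b" "sg a (- b)" "\<alpha> > 0"
  shows "\<alpha> *\<^sub>R a + \<beta> *\<^sub>R b \<in> C"
proof -
  define s where "s = \<alpha> + \<bar>\<beta>\<bar>"
  have s: "s > 0" using assms(3) by (simp add: s_def)
  define t where "t = \<bar>\<beta>\<bar> / s"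
  have t: "t \<in> {0..1}" using s by (auto simp: t_def s_def assms(3) less_imp_le)
  have st1: "s * (1 - t) = \<alpha>" using s by (simp add: t_def s_def field_simps)
  have st2: "s * t = \<bar>\<beta>\<bar>" using s by (simp add: t_def)
  show ?thesis
  proof (cases "\<beta> \<ge> 0")
    case True
    have "(1 - t) *\<^sub>R a + t *\<^sub>R b \<in> C" using assms(1) t by (simp add: sg_def)
    then have "s *\<^sub>R ((1 - t) *\<^sub>R a + t *\<^sub>R b) \<in> C" using C_scale s by simp
    moreover have "s *\<^sub>R ((1 - t) *\<^sub>R a + t *\<^sub>R b) = \<alpha> *\<^sub>R a + \<beta> *\<^sub>R b"
      using True st1 st2 by (simp add: scaleR_add_right)
    ultimately show ?thesis by simp
  next
    case False
    have "(1 - t) *\<^sub>R a + t *\<^sub>R (- b) \<in> C" using assms(2) t by (simp add: sg_def)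
    then have "s *\<^sub>R ((1 - t) *\<^sub>R a + t *\<^sub>R (- b)) \<in> C" using C_scale s by simp
    moreover have "s *\<^sub>R ((1 - t) *\<^sub>R a + t *\<^sub>R (- b)) = \<alpha> *\<^sub>R a + \<beta> *\<^sub>R b"
      using False st1 st2 by (simp add: scaleR_diff_right flip: st1)
    ultimately show ?thesis by simp
  qed
qed

lemma not_both:
  assumes "sg a b" "sg a (- b)"
  shows False
proof -
  have ab: "a \<in> C" "b \<in> C" using sg_ends[OF assms(1)] by auto
  show False
  proof (cases "ind a b")
    case True
    have "line_of a b \<subseteq> \<Omega>"
    proof
      fix p assume "p \<in> line_of a b"
      then obtain u where u: "u \<noteq> 0" "p = span {u}" "u \<in> span {a, b}" using line_of_elem by blast
      then obtain \<alpha> \<beta> where u2: "u = \<alpha> *\<^sub>R a + \<beta> *\<^sub>R b" by (auto simp: in_span2)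
      have "u \<in> C"
      proof (cases "\<alpha> > 0")
        case True then show ?thesis using pos_comb[OF assms] u2 by simp
      next
        case False
        show ?thesis
        proof (cases "\<alpha> = 0")
          case True
          then have "\<beta> \<noteq> 0" using u u2 by auto
          then show ?thesis using C_scale[OF ab(2)] u2 True by simp
        next
          case False
          then have "(- \<alpha>) *\<^sub>R a + (- \<beta>) *\<^sub>R b \<in> C" using \<open>\<not> \<alpha> > 0\<close> by (intro pos_comb[OF assms]) simp
          then have "- u \<in> C" using u2 by (simp add: algebra_simps)
          then show ?thesis using C_neg by fastforce
        qed
      qed
      then show "p \<in> \<Omega>" using u by (simp add: C_def)
    qed
    then have "line_of a b \<inter> \<Omega> = line_of a b" by blast
    moreover have "line_of a b \<inter> \<Omega> \<noteq> line_of a b"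
      using cvx line_of_lines[OF True] unfolding proj_convex_def by blast
    ultimately show False by blast
  next
    case False
    then obtain c where c: "c \<noteq> 0" "b = c *\<^sub>R a" using not_ind C_nz ab by metis
    show False
    proof (cases "c > 0")
      case True
      define t where "t = 1 / (1 + c)"
      have t: "t \<in> {0..1}" using True by (auto simp: t_def)
      have "(1 - t) *\<^sub>R a + t *\<^sub>R (- b) = 0"
        using True c(2) by (simp add: t_def algebra_simps field_simps)
      moreover have "(1 - t) *\<^sub>R a + t *\<^sub>R (- b) \<in> C" using assms(2) t by (simp add: sg_def)
      ultimately show False using C_nz by fastforce
    next
      case False
      then have cn: "c < 0" using c by simp
      define t where "t = 1 / (1 - c)"
      have t: "t \<in> {0..1}" using cn by (auto simp: t_def)
      have "(1 - t) *\<^sub>R a + t *\<^sub>R b = 0"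
        using cn c(2) by (simp add: t_def algebra_simps field_simps)
      moreover have "(1 - t) *\<^sub>R a + t *\<^sub>R b \<in> C" using assms(1) t by (simp add: sg_def)
      ultimately show False using C_nz by fastforce
    qed
  qed
qed

end

lemma seg_margin:
  fixes a d :: "'a::euclidean_space"
  assumes "open U" "\<forall>t\<in>{0..1::real}. (1 - t) *\<^sub>R a + t *\<^sub>R d \<in> U"
  shows "\<exists>e>0. \<forall>d'. dist d' d < e \<longrightarrow> (\<forall>t\<in>{0..1::real}. (1 - t) *\<^sub>R a + t *\<^sub>R d' \<in> U)"
proof -
  define K where "K = (\<lambda>t. (1 - t) *\<^sub>R a + t *\<^sub>R d) ` {0..1::real}"
  have "compact K" unfolding K_def
    by (intro compact_continuous_image compact_Icc continuous_intros)
  moreover have "K \<subseteq> U" using assms(2) unfolding K_def by blast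
  ultimately obtain e where e: "e > 0" "(\<Union>x\<in>K. ball x e) \<subseteq> U"
    using compact_subset_open_imp_ball_epsilon_subset assms(1) by metis
  show ?thesis
  proof (intro exI[of _ e] conjI e(1) allI impI ballI)
    fix d' t assume d': "dist d' d < e" and t: "t \<in> {0..1::real}"
    have xK: "(1 - t) *\<^sub>R a + t *\<^sub>R d \<in> K" using t unfolding K_def by blast
    have "dist ((1 - t) *\<^sub>R a + t *\<^sub>R d) ((1 - t) *\<^sub>R a + t *\<^sub>R d') = t * dist d d'"
    proof -
      have "(1 - t) *\<^sub>R a + t *\<^sub>R d - ((1 - t) *\<^sub>R a + t *\<^sub>R d') = t *\<^sub>R (d - d')"
        by (simp add: algebra_simps)
      then show ?thesis using t by (simp add: dist_norm)
    qed
    also have "\<dots> \<le> dist d d'" using t by (simp add: mult_left_le_one_le)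
    also have "\<dots> < e" using d' by (simp add: dist_commute)
    finally have "(1 - t) *\<^sub>R a + t *\<^sub>R d' \<in> ball ((1 - t) *\<^sub>R a + t *\<^sub>R d) e" by simp
    then show "(1 - t) *\<^sub>R a + t *\<^sub>R d' \<in> U" using e(2) xK by blast
  qed
qed

lemma inv_scale: "u = c *\<^sub>R (w::'a::real_vector) \<Longrightarrow> c \<noteq> 0 \<Longrightarrow> (1 / c) *\<^sub>R u = w" by simp

context pc begin

lemma sg_sym: "sg a b \<Longrightarrow> sg b a"
  unfolding sg_def
proof (intro ballI)
  fix t :: real assume h: "\<forall>t\<in>{0..1}. (1 - t) *\<^sub>R a + t *\<^sub>R b \<in> C" and t: "t \<in> {0..1}"
  have "1 - t \<in> {0..1}" using t by auto
  from h[rule_format, OF this] show "(1 - t) *\<^sub>R b + t *\<^sub>R a \<in> C" by (simp add: add.commute)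
qed

lemma arc:
  assumes aC: "a \<in> C" and bC: "b \<in> C"
  shows "sg a b \<or> sg a (- b)"
proof (rule ccontr)
  assume nn: "\<not> (sg a b \<or> sg a (- b))"
  then obtain t1 where t1: "t1 \<in> {0..1}" "(1 - t1) *\<^sub>R a + t1 *\<^sub>R b \<notin> C" unfolding sg_def by blast
  obtain t2 where t2: "t2 \<in> {0..1}" "(1 - t2) *\<^sub>R a + t2 *\<^sub>R (- b) \<notin> C" using nn unfolding sg_def by blast
  show False
  proof (cases "ind a b")
    case False
    then obtain c where c: "c \<noteq> 0" "b = c *\<^sub>R a" using not_ind C_nz aC bC by metis
    show False
    proof (cases "c > 0")
      case True
      have "sg a b" unfolding sg_def
      proof
        fix t :: real assume t: "t \<in> {0..1}"
        have "1 - t + t * c > 0"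
        proof (cases "t = 1")
          case True then show ?thesis using \<open>c > 0\<close> by simp
        next
          case False then show ?thesis using t \<open>c > 0\<close> by (simp add: add_pos_nonneg)
        qed
        then have "(1 - t + t * c) *\<^sub>R a \<in> C" using C_scale aC by simp
        then show "(1 - t) *\<^sub>R a + t *\<^sub>R b \<in> C" using c by (simp add: algebra_simps)
      qed
      then show False using nn by blast
    next
      case False
      then have cn: "c < 0" using c by simp
      have "sg a (- b)" unfolding sg_def
      proof
        fix t :: real assume t: "t \<in> {0..1}"
        have "1 - t - t * c > 0"
        proof (cases "t = 1")
          case True then show ?thesis using cn by simp
        next
          case False then show ?thesis using t cn
            by (smt (verit, best) atLeastAtMost_iff mult_nonneg_nonpos)
        qed
        then have "(1 - t - t * c) *\<^sub>R a \<in> C" using C_scale aC by simp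
        then show "(1 - t) *\<^sub>R a + t *\<^sub>R (- b) \<in> C" using c by (simp add: algebra_simps)
      qed
      then show False using nn by blast
    qed
  next
    case True
    note indab = True
    define u1 where "u1 = (1 - t1) *\<^sub>R a + t1 *\<^sub>R b"
    define u2 where "u2 = (1 - t2) *\<^sub>R a + t2 *\<^sub>R (- b)"
    have "t1 \<noteq> 0" using t1 aC by auto
    have "t1 \<noteq> 1" using t1 bC by auto
    have "t2 \<noteq> 0" using t2 aC by auto
    have "t2 \<noteq> 1" using t2 bC C_neg by auto
    have T1: "0 < t1" "t1 < 1" using t1 \<open>t1 \<noteq> 0\<close> \<open>t1 \<noteq> 1\<close> by auto
    have T2: "0 < t2" "t2 < 1" using t2 \<open>t2 \<noteq> 0\<close> \<open>t2 \<noteq> 1\<close> by auto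
    define \<Delta> where "\<Delta> = t2 * (1 - t1) + t1 * (1 - t2)"
    have \<Delta>: "\<Delta> > 0" unfolding \<Delta>_def using T1 T2 by (simp add: add_pos_pos)
    have comb: "\<alpha> *\<^sub>R u1 + \<beta> *\<^sub>R u2 = (\<alpha> * (1 - t1) + \<beta> * (1 - t2)) *\<^sub>R a + (\<alpha> * t1 - \<beta> * t2) *\<^sub>R b"
      for \<alpha> \<beta> unfolding u1_def u2_def by (simp add: algebra_simps)
    define A1 where "A1 = t2 / \<Delta>"
    define A2 where "A2 = t1 / \<Delta>"
    define B1 where "B1 = (1 - t2) / \<Delta>"
    define B2 where "B2 = - (1 - t1) / \<Delta>"
    have "A1 * (1 - t1) + A2 * (1 - t2) = (t2 * (1 - t1) + t1 * (1 - t2)) / \<Delta>"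
      using \<Delta> unfolding A1_def A2_def by (simp add: field_simps)
    also have "\<dots> = 1" using \<Delta> by (simp add: \<Delta>_def[symmetric])
    finally have "A1 * (1 - t1) + A2 * (1 - t2) = 1" .
    moreover have "A1 * t1 - A2 * t2 = 0"
      using \<Delta> unfolding A1_def A2_def by (simp add: field_simps)
    ultimately have ea: "a = A1 *\<^sub>R u1 + A2 *\<^sub>R u2" by (simp add: comb)
    have "B1 * t1 - B2 * t2 = ((1 - t2) * t1 + (1 - t1) * t2) / \<Delta>"
      using \<Delta> unfolding B1_def B2_def by (simp add: field_simps)
    also have "\<dots> = 1" using \<Delta> by (simp add: \<Delta>_def algebra_simps)
    finally have "B1 * t1 - B2 * t2 = 1" .
    moreover have "B1 * (1 - t1) + B2 * (1 - t2) = 0"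
      using \<Delta> unfolding B1_def B2_def by (simp add: field_simps)
    ultimately have eb: "b = B1 *\<^sub>R u1 + B2 *\<^sub>R u2" by (simp add: comb)
    have ind12: "ind u1 u2" unfolding ind_def
    proof (intro allI impI)
      fix \<alpha> \<beta> assume "\<alpha> *\<^sub>R u1 + \<beta> *\<^sub>R u2 = 0"
      then have "(\<alpha> * (1 - t1) + \<beta> * (1 - t2)) *\<^sub>R a + (\<alpha> * t1 - \<beta> * t2) *\<^sub>R b = 0" by (simp add: comb)
      then have e1: "\<alpha> * (1 - t1) + \<beta> * (1 - t2) = 0" and e2: "\<alpha> * t1 - \<beta> * t2 = 0"
        using indab unfolding ind_def by blast+
      have "\<alpha> * \<Delta> = t2 * (\<alpha> * (1 - t1) + \<beta> * (1 - t2)) + (1 - t2) * (\<alpha> * t1 - \<beta> * t2)"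
        unfolding \<Delta>_def by (simp add: algebra_simps)
      then have "\<alpha> * \<Delta> = 0" using e1 e2 by simp
      moreover have "\<beta> * \<Delta> = t1 * (\<alpha> * (1 - t1) + \<beta> * (1 - t2)) - (1 - t1) * (\<alpha> * t1 - \<beta> * t2)"
        unfolding \<Delta>_def by (simp add: algebra_simps)
      then have "\<beta> * \<Delta> = 0" using e1 e2 by simp
      ultimately show "\<alpha> = 0 \<and> \<beta> = 0" using \<Delta> by simp
    qed
    obtain f g where fg: "linear f" "linear g" "continuous_on UNIV f" "continuous_on UNIV g"
      "\<And>\<alpha> \<beta>. f (\<alpha> *\<^sub>R u1 + \<beta> *\<^sub>R u2) = \<alpha>" "\<And>\<alpha> \<beta>. g (\<alpha> *\<^sub>R u1 + \<beta> *\<^sub>R u2) = \<beta>"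
      using dual2[OF ind12] by blast
    have rep: "u = f u *\<^sub>R u1 + g u *\<^sub>R u2" if uin: "u \<in> span {a, b}" for u
    proof -
      obtain \<alpha> \<beta> where u: "u = \<alpha> *\<^sub>R a + \<beta> *\<^sub>R b" using uin in_span2[of u a b] by blast
      have "u = (\<alpha> * A1 + \<beta> * B1) *\<^sub>R u1 + (\<alpha> * A2 + \<beta> * B2) *\<^sub>R u2"
        unfolding u by (subst ea, subst eb) (simp add: algebra_simps)
      then show ?thesis using fg(5,6) by metis
    qed
    have fs: "f (c *\<^sub>R v) = c * f v" "g (c *\<^sub>R v) = c * g v" for c v
      using linear_cmul[OF fg(1)] linear_cmul[OF fg(2)] by auto
    have f0: "f 0 = 0" "g 0 = 0" using linear_0[OF fg(1)] linear_0[OF fg(2)] by auto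
    define O1 where "O1 = {v. 0 < f v * g v}"
    define O2 where "O2 = {v. f v * g v < 0}"
    have oO1: "open O1" unfolding O1_def by (intro open_Collect_less continuous_intros fg(3,4))
    have oO2: "open O2" unfolding O2_def by (intro open_Collect_less continuous_intros fg(3,4))
    have z1: "0 \<notin> O1" "0 \<notin> O2" using f0 by (auto simp: O1_def O2_def)
    have s1: "c *\<^sub>R v \<in> O1" if "v \<in> O1" "c \<noteq> 0" for v c
    proof -
      have "f (c *\<^sub>R v) * g (c *\<^sub>R v) = c^2 * (f v * g v)" by (simp add: fs power2_eq_square algebra_simps)
      then show ?thesis using that by (simp add: O1_def)
    qed
    have s2: "c *\<^sub>R v \<in> O2" if "v \<in> O2" "c \<noteq> 0" for v c
    proof -
      have "f (c *\<^sub>R v) * g (c *\<^sub>R v) = c^2 * (f v * g v)" by (simp add: fs power2_eq_square algebra_simps)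
      then show ?thesis using that by (simp add: O2_def mult_pos_neg)
    qed
    define E1 where "E1 = (\<lambda>v. span {v}) ` O1"
    define E2 where "E2 = (\<lambda>v. span {v}) ` O2"
    have oE1: "openin proj_top E1" unfolding E1_def by (rule sat_open[OF oO1 z1(1) s1])
    have oE2: "openin proj_top E2" unfolding E2_def by (rule sat_open[OF oO2 z1(2) s2])
    have mE1: "span {v} \<in> E1 \<longleftrightarrow> v \<in> O1" if "v \<noteq> 0" for v
      unfolding E1_def by (rule sat_open_mem[OF z1(1) s1 that])
    have mE2: "span {v} \<in> E2 \<longleftrightarrow> v \<in> O2" if "v \<noteq> 0" for v
      unfolding E2_def by (rule sat_open_mem[OF z1(2) s2 that])
    define S where "S = line_of a b \<inter> \<Omega>"
    have conS: "connectedin proj_top S"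
      using cvx line_of_lines[OF indab] unfolding proj_convex_def S_def by blast
    have u1C: "u1 \<notin> C" using t1 by (simp add: u1_def)
    have u2C: "u2 \<notin> C" using t2 by (simp add: u2_def)
    have c1: "S \<subseteq> E1 \<union> E2"
    proof
      fix p assume "p \<in> S"
      then obtain u where u: "u \<noteq> 0" "p = span {u}" "u \<in> span {a, b}" "p \<in> \<Omega>"
        unfolding S_def using line_of_elem by blast
      have uC: "u \<in> C" using u by (simp add: C_def)
      have "f u \<noteq> 0"
      proof
        assume "f u = 0"
        then have "u = g u *\<^sub>R u2" using rep[OF u(3)] by simp
        moreover have "g u \<noteq> 0" using calculation u(1) by auto
        ultimately have "(1 / g u) *\<^sub>R u = u2" by (rule inv_scale)
        then show False using C_scale[OF uC, of "1 / g u"] \<open>g u \<noteq> 0\<close> u2C by simp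
      qed
      moreover have "g u \<noteq> 0"
      proof
        assume "g u = 0"
        then have "u = f u *\<^sub>R u1" using rep[OF u(3)] by simp
        moreover have "f u \<noteq> 0" using calculation u(1) by auto
        ultimately have "(1 / f u) *\<^sub>R u = u1" by (rule inv_scale)
        then show False using C_scale[OF uC, of "1 / f u"] \<open>f u \<noteq> 0\<close> u1C by simp
      qed
      ultimately have "f u * g u \<noteq> 0" by simp
      then have "u \<in> O1 \<or> u \<in> O2" unfolding O1_def O2_def mem_Collect_eq by linarith
      then show "p \<in> E1 \<union> E2" using mE1 mE2 u by blast
    qed
    have c2: "E1 \<inter> E2 \<inter> S = {}"
    proof (rule ccontr)
      assume "E1 \<inter> E2 \<inter> S \<noteq> {}"
      then obtain p where p: "p \<in> E1" "p \<in> E2" "p \<in> S" by blast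
      then obtain u where u: "u \<noteq> 0" "p = span {u}" unfolding S_def using line_of_elem by blast
      then have "u \<in> O1" "u \<in> O2" using mE1 mE2 p by auto
      then show False unfolding O1_def O2_def by simp
    qed
    have aS: "span {a} \<in> S" unfolding S_def
      using aC C_nz[OF aC] mem_line_of[of a a b] by (auto simp: C_def intro: span_base)
    have bS: "span {b} \<in> S" unfolding S_def
      using bC C_nz[OF bC] mem_line_of[of b a b] by (auto simp: C_def intro: span_base)
    have "f a = A1" "g a = A2" using fg(5,6) ea by metis+
    moreover have "A1 > 0" "A2 > 0" using \<Delta> T1 T2 by (auto simp: A1_def A2_def)
    ultimately have "a \<in> O1" by (simp add: O1_def)
    then have aE: "span {a} \<in> E1" using mE1 C_nz[OF aC] by blast
    have "f b = B1" "g b = B2" using fg(5,6) eb by metis+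
    moreover have "B1 > 0" "B2 < 0" using \<Delta> T1 T2 by (auto simp: B1_def B2_def divide_neg_pos)
    ultimately have "b \<in> O2" by (simp add: O2_def mult_pos_neg)
    then have bE: "span {b} \<in> E2" using mE2 C_nz[OF bC] by blast
    have "E1 \<inter> S \<noteq> {}" using aS aE by blast
    moreover have "E2 \<inter> S \<noteq> {}" using bS bE by blast
    ultimately show False using conS c1 c2 oE1 oE2 unfolding connectedin by blast
  qed
qed

end

lemma closed_line: "closedin proj_top (line_of (a::real^'n) b)"
proof -
  define Q where "Q = - span {a, b}"
  have oQ: "open Q" unfolding Q_def by (simp add: open_Compl)
  have z: "0 \<notin> Q" unfolding Q_def by (simp add: span_zero)
  have s: "c *\<^sub>R v \<in> Q" if "v \<in> Q" "c \<noteq> 0" for v c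
  proof (rule ccontr)
    assume "c *\<^sub>R v \<notin> Q"
    then have "c *\<^sub>R v \<in> span {a, b}" by (simp add: Q_def)
    then have "(1 / c) *\<^sub>R (c *\<^sub>R v) \<in> span {a, b}" by (rule span_scale)
    then show False using that unfolding Q_def by simp
  qed
  have eq: "topspace proj_top - line_of a b = (\<lambda>v. span {v}) ` Q"
  proof
    show "topspace proj_top - line_of a b \<subseteq> (\<lambda>v. span {v}) ` Q"
    proof
      fix p assume p: "p \<in> topspace proj_top - line_of a b"
      then obtain v where v: "v \<noteq> 0" "p = span {v}" by (auto simp: topspace_proj_top proj_points_iff)
      then have "v \<notin> span {a, b}" using p mem_line_of[OF v(1), of a b] by auto
      then show "p \<in> (\<lambda>v. span {v}) ` Q" using v unfolding Q_def by blast
    qed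
  next
    show "(\<lambda>v. span {v}) ` Q \<subseteq> topspace proj_top - line_of a b"
    proof
      fix p assume "p \<in> (\<lambda>v. span {v}) ` Q"
      then obtain v where v: "v \<in> Q" "p = span {v}" by blast
      have "v \<noteq> 0" using v z by auto
      then show "p \<in> topspace proj_top - line_of a b"
        using v mem_line_of[of v a b] unfolding Q_def by (auto simp: topspace_proj_top proj_points_iff)
    qed
  qed
  have "line_of a b \<subseteq> topspace proj_top" by (simp add: topspace_proj_top line_of_sub)
  then show ?thesis unfolding closedin_def eq using sat_open[OF oQ z s] by blast
qed

context pc begin

lemma sg_near: "sg a X \<Longrightarrow> \<exists>e>0. \<forall>Y. dist Y X < e \<longrightarrow> sg a Y"
  unfolding sg_def using seg_margin[OF C_open] by blast

lemma sg_trans: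
  assumes ab: "sg a b" and bc: "sg b c"
  shows "sg a c"
proof -
  define dd where "dd s = (1 - s) *\<^sub>R b + s *\<^sub>R c" for s
  have ddC: "dd s \<in> C" if "s \<in> {0..1}" for s using bc that by (simp add: sg_def dd_def)
  have aC: "a \<in> C" using sg_ends[OF ab] by simp
  have ddist: "dist (dd s) (dd s0) = \<bar>s - s0\<bar> * norm (c - b)" for s s0
  proof -
    have "dd s - dd s0 = (s - s0) *\<^sub>R (c - b)" unfolding dd_def by (simp add: algebra_simps)
    then show ?thesis by (simp add: dist_norm)
  qed
  define N where "N = norm (c - b) + 1"
  have N: "N > 0" unfolding N_def by (simp add: add_nonneg_pos)
  have close: "dist (dd y) (dd s0) < e" if "e > 0" "dist y s0 < e / N" for e y s0
  proof -
    have "dist (dd y) (dd s0) \<le> \<bar>y - s0\<bar> * N"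
      unfolding ddist N_def by (simp add: mult_left_mono)
    also have "\<dots> < e" using that N by (simp add: dist_real_def pos_less_divide_eq)
    finally show ?thesis .
  qed
  have opI: "\<exists>T. openin (top_of_set {0..1}) T \<and> s0 \<in> T \<and> (\<forall>x\<in>T. \<forall>y\<in>T. sg a (dd x) \<longrightarrow> sg a (dd y))"
    if s0: "s0 \<in> {0..1::real}" for s0
  proof -
    have T: "openin (top_of_set {0..1}) ({0..1} \<inter> ball s0 r)" "s0 \<in> {0..1} \<inter> ball s0 r" if "r > 0" for r :: real
      using s0 that by auto
    from arc[OF aC ddC[OF s0]] show ?thesis
    proof
      assume h: "sg a (dd s0)"
      obtain e where e: "e > 0" "\<And>Y. dist Y (dd s0) < e \<Longrightarrow> sg a Y" using sg_near[OF h] by blast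
      have "\<forall>y\<in>{0..1} \<inter> ball s0 (e / N). sg a (dd y)"
        using e close by (auto simp: dist_commute)
      then show ?thesis using T[of "e / N"] e N by (intro exI[of _ "{0..1} \<inter> ball s0 (e / N)"]) auto
    next
      assume h: "sg a (- dd s0)"
      obtain e where e: "e > 0" "\<And>Y. dist Y (- dd s0) < e \<Longrightarrow> sg a Y" using sg_near[OF h] by blast
      have "\<forall>y\<in>{0..1} \<inter> ball s0 (e / N). sg a (- dd y)"
      proof
        fix y assume "y \<in> {0..1} \<inter> ball s0 (e / N)"
        then have "dist (dd y) (dd s0) < e" using e close by (auto simp: dist_commute)
        then have "dist (- dd y) (- dd s0) < e" by (simp add: dist_norm norm_minus_commute)
        then show "sg a (- dd y)" using e by blast
      qed
      then have "\<forall>y\<in>{0..1} \<inter> ball s0 (e / N). \<not> sg a (dd y)" using not_both by blast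
      then show ?thesis using T[of "e / N"] e N by (intro exI[of _ "{0..1} \<inter> ball s0 (e / N)"]) auto
    qed
  qed
  have "sg a (dd 1)"
  proof (rule connected_induction_simple[where S="{0..1::real}" and a=0 and P="\<lambda>s. sg a (dd s)"])
    show "connected {0..1::real}" by simp
    show "(0::real) \<in> {0..1}" by simp
    show "(1::real) \<in> {0..1}" by simp
    show "sg a (dd 0)" using ab by (simp add: dd_def)
    show "\<And>s0. s0 \<in> {0..1::real} \<Longrightarrow> \<exists>T. openin (top_of_set {0..1}) T \<and> s0 \<in> T \<and> (\<forall>x\<in>T. \<forall>y\<in>T. sg a (dd x) \<longrightarrow> sg a (dd y))"
      by (rule opI)
  qed
  then show ?thesis by (simp add: dd_def)
qed

lemma sg_pos:
  assumes "v \<in> C" "c > 0" shows "sg v (c *\<^sub>R v)"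
  unfolding sg_def
proof
  fix t :: real assume t: "t \<in> {0..1}"
  have "1 - t + t * c > 0"
  proof (cases "t = 1")
    case True then show ?thesis using assms by simp
  next
    case False then show ?thesis using t assms by (simp add: add_pos_nonneg)
  qed
  then have "(1 - t + t * c) *\<^sub>R v \<in> C" using C_scale assms by simp
  then show "(1 - t) *\<^sub>R v + t *\<^sub>R (c *\<^sub>R v) \<in> C" by (simp add: algebra_simps)
qed

lemma sg_refl: "v \<in> C \<Longrightarrow> sg v v"
  using sg_pos[of v 1] by simp

lemma sg_sub:
  assumes "sg a b" "t \<in> {0..1}" shows "sg a ((1 - t) *\<^sub>R a + t *\<^sub>R b)"
  unfolding sg_def
proof
  fix s :: real assume s: "s \<in> {0..1}"
  have "s * t \<in> {0..1}" using s assms(2) by (auto simp: mult_le_one)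
  then have "(1 - s * t) *\<^sub>R a + (s * t) *\<^sub>R b \<in> C" using assms(1) by (simp add: sg_def)
  then show "(1 - s) *\<^sub>R a + s *\<^sub>R ((1 - t) *\<^sub>R a + t *\<^sub>R b) \<in> C" by (simp add: algebra_simps)
qed

lemma P_conv: "sg k a \<Longrightarrow> sg k b \<Longrightarrow> t \<in> {0..1} \<Longrightarrow> sg k ((1 - t) *\<^sub>R a + t *\<^sub>R b)"
  by (meson sg_sub sg_sym sg_trans)

lemma P_cone: "sg k v \<Longrightarrow> c > 0 \<Longrightarrow> sg k (c *\<^sub>R v)"
  by (meson sg_ends sg_pos sg_trans)

lemma P_add:
  assumes "sg k a" "sg k b" shows "sg k (a + b)"
proof -
  have "sg k ((1 - 1/2) *\<^sub>R a + (1/2) *\<^sub>R b)" by (rule P_conv[OF assms]) simp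
  then have "sg k (2 *\<^sub>R ((1 - 1/2) *\<^sub>R a + (1/2) *\<^sub>R b))" by (rule P_cone) simp
  then show ?thesis by (simp add: algebra_simps)
qed

lemma P_int_cl:
  assumes a: "sg k a" and b: "b \<in> closure {v. sg k v}" shows "sg k (a + b)"
proof -
  obtain e where e: "e > 0" "\<And>Y. dist Y a < e \<Longrightarrow> sg k Y" using sg_near[OF a] by blast
  obtain w where w: "sg k w" "dist w b < e" using b e(1) unfolding closure_approachable by blast
  have "dist (a + b - w) a < e" using w(2) by (simp add: dist_norm norm_minus_commute)
  then have "sg k (a + b - w)" using e by blast
  then have "sg k ((a + b - w) + w)" using P_add w(1) by blast
  then show ?thesis by simp
qed

lemma pointed:
  assumes kC: "k \<in> C" and w1: "w \<in> closure {v. sg k v}" and w2: "- w \<in> closure {v. sg k v}"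
  shows "w = 0"
proof (rule ccontr)
  assume wnz: "w \<noteq> 0"
  have kk: "sg k k" using sg_refl[OF kC] .
  have plus: "sg k (k + t *\<^sub>R w)" if "t \<ge> 0" for t
  proof (cases "t = 0")
    case True then show ?thesis using kk by simp
  next
    case False
    then have t: "t > 0" using that by simp
    have "sg k ((1 / t) *\<^sub>R k + w)" using P_int_cl[OF P_cone[OF kk, of "1/t"] w1] t by simp
    then have "sg k (t *\<^sub>R ((1 / t) *\<^sub>R k + w))" using P_cone t by blast
    then show ?thesis using t by (simp add: algebra_simps)
  qed
  have minus: "sg k (k + t *\<^sub>R (- w))" if "t \<ge> 0" for t
  proof (cases "t = 0")
    case True then show ?thesis using kk by simp
  next
    case False
    then have t: "t > 0" using that by simp
    have "sg k ((1 / t) *\<^sub>R k + - w)" using P_int_cl[OF P_cone[OF kk, of "1/t"] w2] t by simp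
    then have "sg k (t *\<^sub>R ((1 / t) *\<^sub>R k + - w))" using P_cone t by blast
    then show ?thesis using t by (simp add: algebra_simps)
  qed
  have any: "sg k (k + t *\<^sub>R w)" for t
  proof (cases "t \<ge> 0")
    case True then show ?thesis using plus by blast
  next
    case False then show ?thesis using minus[of "- t"] by simp
  qed
  show False
  proof (cases "ind k w")
    case False
    then obtain c where c: "c \<noteq> 0" "w = c *\<^sub>R k" using not_ind C_nz[OF kC] wnz by metis
    have "(- 2 / c) *\<^sub>R w = (- 2) *\<^sub>R k" using c by simp
    moreover have "k + (- 2) *\<^sub>R k = (1 + - 2) *\<^sub>R k" by (simp only: scaleR_left_distrib scaleR_one)
    ultimately have keq: "k + (- 2 / c) *\<^sub>R w = - k" by simp
    have "sg k (k + (- 2 / c) *\<^sub>R w)" by (rule any)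
    then have "sg k (- k)" by (simp only: keq)
    then show False using not_both kk by blast
  next
    case True
    define L where "L = line_of k w"
    have LL: "L \<in> proj_lines" unfolding L_def by (rule line_of_lines[OF True])
    have sub: "L \<subseteq> proj_top closure_of (L \<inter> \<Omega>)"
    proof
      fix p assume "p \<in> L"
      then obtain u where u: "u \<noteq> 0" "p = span {u}" "u \<in> span {k, w}" unfolding L_def using line_of_elem by blast
      then obtain \<alpha> \<beta> where u2: "u = \<alpha> *\<^sub>R k + \<beta> *\<^sub>R w" using in_span2[of u k w] by blast
      show "p \<in> proj_top closure_of (L \<inter> \<Omega>)"
      proof (cases "\<alpha> = 0")
        case False
        have "sg k (k + (\<beta> / \<alpha>) *\<^sub>R w)" by (rule any)
        then have "k + (\<beta> / \<alpha>) *\<^sub>R w \<in> C" using sg_ends by blast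
        then have "\<alpha> *\<^sub>R (k + (\<beta> / \<alpha>) *\<^sub>R w) \<in> C" using C_scale False by blast
        then have "u \<in> C" using False u2 by (simp add: algebra_simps)
        then have "p \<in> L \<inter> \<Omega>" using u \<open>p \<in> L\<close> by (simp add: C_def)
        moreover have "L \<inter> \<Omega> \<subseteq> topspace proj_top" unfolding L_def by (auto simp: topspace_proj_top dest: subsetD[OF line_of_sub])
        ultimately show ?thesis using closure_of_subset by blast
      next
        case True
        then have "\<beta> \<noteq> 0" using u u2 by auto
        have sp: "p = span {w}" using u u2 True span1_eq[of u w] wnz \<open>\<beta> \<noteq> 0\<close> by auto
        have "\<forall>e>0. \<exists>u'. u' \<noteq> 0 \<and> span {u'} \<in> L \<inter> \<Omega> \<and> dist u' w < e"
        proof (intro allI impI)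
          fix e :: real assume e: "e > 0"
          define \<epsilon> where "\<epsilon> = e / (norm k + 1)"
          have \<epsilon>: "\<epsilon> > 0" using e by (simp add: \<epsilon>_def add_nonneg_pos)
          have "sg k (k + (1 / \<epsilon>) *\<^sub>R w)" by (rule any)
          then have "k + (1 / \<epsilon>) *\<^sub>R w \<in> C" using sg_ends by blast
          then have "\<epsilon> *\<^sub>R (k + (1 / \<epsilon>) *\<^sub>R w) \<in> C" using C_scale \<epsilon> by simp
          then have uC: "\<epsilon> *\<^sub>R k + w \<in> C" using \<epsilon> by (simp add: algebra_simps)
          have "\<epsilon> *\<^sub>R k + w \<in> span {k, w}" using in_span2[of _ k w] by (metis scaleR_one)
          then have "span {\<epsilon> *\<^sub>R k + w} \<in> L" unfolding L_def using mem_line_of C_nz[OF uC] by blast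
          moreover have "span {\<epsilon> *\<^sub>R k + w} \<in> \<Omega>" using uC by (simp add: C_def)
          moreover have "dist (\<epsilon> *\<^sub>R k + w) w < e"
          proof -
            have "dist (\<epsilon> *\<^sub>R k + w) w = \<epsilon> * norm k" using \<epsilon> by (simp add: dist_norm)
            also have "\<dots> < e"
            proof -
              have p: "norm k + 1 > 0" by (simp add: add_nonneg_pos)
              have "e * norm k < e * (norm k + 1)" using e by simp
              then show ?thesis unfolding \<epsilon>_def using p by (simp add: pos_divide_less_eq)
            qed
            finally show ?thesis .
          qed
          ultimately show "\<exists>u'. u' \<noteq> 0 \<and> span {u'} \<in> L \<inter> \<Omega> \<and> dist u' w < e"
            using C_nz[OF uC] by blast
        qed
        then show ?thesis unfolding sp using closure_char[OF wnz] by blast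
      qed
    qed
    have "proj_top closure_of (L \<inter> \<Omega>) \<subseteq> L"
      by (rule closure_of_minimal) (auto simp: L_def closed_line)
    with sub have "proj_top closure_of (L \<inter> \<Omega>) = L" by blast
    then show False using prp LL unfolding proj_proper_def by blast
  qed
qed

end

lemma tendsto_mv:
  fixes A :: "'a \<Rightarrow> real^'n^'m"
  assumes "(A \<longlongrightarrow> h) F" "(x \<longlongrightarrow> x0) F"
  shows "((\<lambda>n. A n *v x n) \<longlongrightarrow> h *v x0) F"
proof (rule vec_tendstoI)
  fix i
  have "((\<lambda>n. \<Sum>j\<in>UNIV. A n $ i $ j * x n $ j) \<longlongrightarrow> (\<Sum>j\<in>UNIV. h $ i $ j * x0 $ j)) F"
    by (intro tendsto_sum tendsto_mult tendsto_vec_nth assms)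
  then show "((\<lambda>n. (A n *v x n) $ i) \<longlongrightarrow> (h *v x0) $ i) F"
    by (simp add: matrix_vector_mult_def)
qed

definition par :: "real^'n \<Rightarrow> real^'n \<Rightarrow> bool" where
  "par a b \<longleftrightarrow> (\<forall>i j. a $ i * b $ j = a $ j * b $ i)"

lemma par_span: 
  assumes "p0 \<noteq> 0" shows "par x p0 \<longleftrightarrow> x \<in> span {p0}"
proof
  assume h: "par x p0"
  obtain i where i: "p0 $ i \<noteq> 0" using assms by (metis vec_eq_iff zero_index)
  have "x = (x $ i / p0 $ i) *\<^sub>R p0"
  proof (subst vec_eq_iff, intro allI)
    fix j
    have "x $ j * p0 $ i = x $ i * p0 $ j" using h unfolding par_def by metis
    then show "x $ j = ((x $ i / p0 $ i) *\<^sub>R p0) $ j" using i by (simp add: field_simps)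
  qed
  then show "x \<in> span {p0}" by (metis span_base span_scale singletonI)
next
  assume "x \<in> span {p0}"
  then obtain c where "x = c *\<^sub>R p0" by (auto simp: span_singleton scaleR_conv_of_real)
  then show "par x p0" unfolding par_def by simp
qed

lemma par_limit:
  assumes "\<And>n. par (a n) (b n)" "a \<longlonglongrightarrow> a0" "b \<longlonglongrightarrow> b0"
  shows "par a0 b0"
  unfolding par_def
proof (intro allI)
  fix i j
  have "(\<lambda>n. a n $ i * b n $ j) \<longlonglongrightarrow> a0 $ i * b0 $ j" by (intro tendsto_intros assms)
  moreover have "(\<lambda>n. a n $ i * b n $ j) \<longlonglongrightarrow> a0 $ j * b0 $ i"
  proof -
    have "(\<lambda>n. a n $ j * b n $ i) \<longlonglongrightarrow> a0 $ j * b0 $ i" by (intro tendsto_intros assms)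
    moreover have "(\<lambda>n. a n $ j * b n $ i) = (\<lambda>n. a n $ i * b n $ j)"
      using assms(1) unfolding par_def by metis
    ultimately show ?thesis by simp
  qed
  ultimately show "a0 $ i * b0 $ j = a0 $ j * b0 $ i" by (rule LIMSEQ_unique)
qed

lemma span_par: 
  assumes "a \<noteq> 0" "b \<noteq> 0" "span {a} = span {b}" shows "par a b"
proof -
  obtain c where "a = c *\<^sub>R b" using span1_eq[OF assms(1,2)] assms(3) by auto
  then show ?thesis using par_span[OF assms(2)] by (simp add: span_scale span_base)
qed

lemma par_span_eq:
  assumes "a \<noteq> 0" "b \<noteq> 0" "par a b" shows "span {a} = span {b}"
proof -
  have "a \<in> span {b}" using par_span[OF assms(2)] assms(3) by simp
  then obtain c where c: "a = c *\<^sub>R b" by (auto simp: span_singleton scaleR_conv_of_real)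
  then have "c \<noteq> 0" using assms by auto
  then show ?thesis using span1_eq[OF assms(1,2)] c by auto
qed

lemma proj_act_span: "proj_act A (span {v}) = span {A *v v}"
proof -
  have "(\<lambda>v. A *v v) ` span {v} = span ((\<lambda>v. A *v v) ` {v})"
    by (rule span_linear_image[symmetric]) simp
  then show ?thesis by (simp add: proj_act_def)
qed

lemma inv_props: "invertible A \<Longrightarrow> A ** matrix_inv A = mat 1 \<and> matrix_inv A ** A = mat 1"
  unfolding invertible_def matrix_inv_def by (rule someI_ex)

lemma inv_nz: "invertible (A::real^'n^'n) \<Longrightarrow> x \<noteq> 0 \<Longrightarrow> A *v x \<noteq> 0"
  using inj_matrix_vector_mult[of A] by (metis injD matrix_vector_mult_0_right)

lemma inv_nz_mat: "invertible (A::real^'n^'n) \<Longrightarrow> A \<noteq> 0"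
proof
  assume "invertible A" "A = 0"
  then have "A *v (1::real^'n) \<noteq> 0" using inv_nz[of A 1] by simp
  then show False using \<open>A = 0\<close> by simp
qed

lemma ball_proj_open:
  fixes v :: "real^'n"
  assumes "0 \<notin> ball v r"
  shows "openin proj_top ((\<lambda>u. span {u}) ` ball v r)"
proof -
  define Q where "Q = (\<Union>c\<in>{c. c \<noteq> 0}. ((\<lambda>u. c *\<^sub>R u) -` ball v r)) - {0}"
  have oQ: "open Q" unfolding Q_def
    by (intro open_Diff open_UN ballI continuous_open_vimage closed_singleton open_ball continuous_on_scaleR continuous_on_const continuous_on_id) (simp add: bounded_linear_scaleR_right linear_continuous_at)
  have sQ: "c *\<^sub>R u \<in> Q" if "u \<in> Q" "c \<noteq> 0" for u c
  proof -
    from that obtain d where "d \<noteq> 0" "d *\<^sub>R u \<in> ball v r" "u \<noteq> 0" unfolding Q_def by auto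
    then have "(d / c) *\<^sub>R (c *\<^sub>R u) \<in> ball v r" using that by simp
    moreover have "c *\<^sub>R u \<noteq> 0" using that \<open>u \<noteq> 0\<close> by simp
    ultimately show ?thesis unfolding Q_def using \<open>d \<noteq> 0\<close> that(2)
      by (intro DiffI UN_I[of "d/c"]) auto
  qed
  have eq: "(\<lambda>u. span {u}) ` ball v r = (\<lambda>u. span {u}) ` Q"
  proof
    show "(\<lambda>u. span {u}) ` ball v r \<subseteq> (\<lambda>u. span {u}) ` Q"
    proof
      fix p assume "p \<in> (\<lambda>u. span {u}) ` ball v r"
      then obtain u where u: "u \<in> ball v r" "p = span {u}" by blast
      have "u \<noteq> 0" using u assms by auto
      then have "u \<in> Q" unfolding Q_def using u by (intro DiffI UN_I[of 1]) auto
      then show "p \<in> (\<lambda>u. span {u}) ` Q" using u by blast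
    qed
  next
    show "(\<lambda>u. span {u}) ` Q \<subseteq> (\<lambda>u. span {u}) ` ball v r"
    proof
      fix p assume "p \<in> (\<lambda>u. span {u}) ` Q"
      then obtain u where u: "u \<in> Q" "p = span {u}" by blast
      then obtain c where c: "c \<noteq> 0" "c *\<^sub>R u \<in> ball v r" "u \<noteq> 0" unfolding Q_def by auto
      have "span {c *\<^sub>R u} = span {u}" using span1_eq[of "c *\<^sub>R u" u] c by auto
      then show "p \<in> (\<lambda>u. span {u}) ` ball v r" using c u by (metis image_eqI)
    qed
  qed
  show ?thesis unfolding eq by (rule sat_open[OF oQ _ sQ]) (simp add: Q_def)
qed

context pc begin

lemma frontier_not_in: "p \<in> proj_top frontier_of \<Omega> \<Longrightarrow> p \<notin> \<Omega>"
  using interior_of_openin[OF opn] by (simp add: frontier_of_def)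

lemma frontier_cl: "p \<in> proj_top frontier_of \<Omega> \<Longrightarrow> p \<in> proj_top closure_of \<Omega>"
  by (simp add: frontier_of_def)

lemma lim_cl:
  assumes Mp: "\<And>n v. sg k0 v \<Longrightarrow> sg k0 (M n *v v)" and lim: "M \<longlonglongrightarrow> h" and x: "sg k0 x"
  shows "h *v x \<in> closure {v. sg k0 v}"
proof -
  have "(\<lambda>n. M n *v x) \<longlonglongrightarrow> h *v x" by (rule tendsto_mv[OF lim tendsto_const])
  moreover have "\<forall>n. M n *v x \<in> {v. sg k0 v}" using Mp x by blast
  ultimately show ?thesis unfolding closure_sequential by (intro exI[of _ "\<lambda>n. M n *v x"] conjI)
qed

lemma ker:
  assumes k0C: "k0 \<in> C" and Mp: "\<And>n v. sg k0 v \<Longrightarrow> sg k0 (M n *v v)" and lim: "M \<longlonglongrightarrow> h"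
    and hnz: "h \<noteq> 0" and vC: "v \<in> C"
  shows "h *v v \<noteq> 0"
proof
  assume hv: "h *v v = 0"
  obtain v' where v': "sg k0 v'" "h *v v' = 0"
  proof (cases "sg k0 v")
    case True then show ?thesis using that hv by blast
  next
    case False
    then have "sg k0 (- v)" using arc[OF k0C vC] by blast
    moreover have "h *v (- v) = 0" using hv matrix_vector_mult_scaleR[of h "-1" v] by simp
    ultimately show ?thesis using that by blast
  qed
  obtain e where e: "e > 0" "\<And>Y. dist Y v' < e \<Longrightarrow> sg k0 Y" using sg_near[OF v'(1)] by blast
  have "h = 0"
  proof (subst matrix_eq, intro allI)
    fix u :: "real^'n"
    define \<delta> where "\<delta> = e / (norm u + 1)"
    have \<delta>: "\<delta> > 0" using e by (simp add: \<delta>_def add_nonneg_pos)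
    have small: "\<delta> * norm u < e"
    proof -
      have p: "norm u + 1 > 0" by (simp add: add_nonneg_pos)
      have "e * norm u < e * (norm u + 1)" using e by simp
      then show ?thesis unfolding \<delta>_def using p by (simp add: pos_divide_less_eq)
    qed
    have "dist (v' + \<delta> *\<^sub>R u) v' < e" using small \<delta> by (simp add: dist_norm)
    then have s1: "sg k0 (v' + \<delta> *\<^sub>R u)" using e by blast
    have "dist (v' - \<delta> *\<^sub>R u) v' < e" using small \<delta> by (simp add: dist_norm)
    then have s2: "sg k0 (v' - \<delta> *\<^sub>R u)" using e by blast
    have "h *v (v' + \<delta> *\<^sub>R u) = \<delta> *\<^sub>R (h *v u)" using v'(2) by (simp add: algebra_simps)
    moreover have "h *v (v' - \<delta> *\<^sub>R u) = - (\<delta> *\<^sub>R (h *v u))" using v'(2) by (simp add: algebra_simps)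
    ultimately have "\<delta> *\<^sub>R (h *v u) \<in> closure {v. sg k0 v}" "- (\<delta> *\<^sub>R (h *v u)) \<in> closure {v. sg k0 v}"
      using lim_cl[OF Mp lim s1] lim_cl[OF Mp lim s2] by auto
    then have "\<delta> *\<^sub>R (h *v u) = 0" by (rule pointed[OF k0C])
    then show "h *v u = 0 *v u" using \<delta> by simp
  qed
  then show False using hnz by simp
qed

end

lemma open_line_vimage: "open S \<Longrightarrow> open ((\<lambda>t::real. a + t *\<^sub>R (b::real^'n)) -` S)"
  by (erule continuous_open_vimage) (intro continuous_add continuous_scaleR continuous_const continuous_ident)

context pc begin

lemma ext_core:
  assumes k0C: "k0 \<in> C" and Mp: "\<And>n v. sg k0 v \<Longrightarrow> sg k0 (M n *v v)" and lim: "M \<longlonglongrightarrow> h"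
    and k': "sg k0 k'" and v: "sg k0 v"
    and anz: "h *v k' \<noteq> 0" and ext: "span {h *v k'} \<in> proj_Ext \<Omega>"
  shows "h *v v \<in> span {h *v k'}"
proof (rule ccontr)
  assume nin: "h *v v \<notin> span {h *v k'}"
  define a where "a = h *v k'"
  define w where "w = v - k'"
  define b where "b = h *v w"
  have anz': "a \<noteq> 0" using anz by (simp add: a_def)
  have hv: "h *v v = a + b" by (simp add: a_def b_def w_def algebra_simps)
  have nin': "a + b \<notin> span {a}" using nin hv by (simp add: a_def)
  have indab: "ind a b"
  proof (rule ccontr)
    assume ni: "\<not> ind a b"
    show False
    proof (cases "b = 0")
      case True then show False using nin' span_base[of a "{a}"] by simp
    next
      case False
      obtain c where c: "c \<noteq> 0" "b = c *\<^sub>R a" using not_ind[OF ni anz' False] by blast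
      have "a + b = (1 + c) *\<^sub>R a" using c by (simp add: algebra_simps)
      moreover have "(1 + c) *\<^sub>R a \<in> span {a}" by (intro span_scale span_base) simp
      ultimately show False using nin' by simp
    qed
  qed
  obtain e where e: "e > 0" "\<And>Y. dist Y k' < e \<Longrightarrow> sg k0 Y" using sg_near[OF k'] by blast
  define \<epsilon> where "\<epsilon> = e / (norm w + 1)"
  have \<epsilon>: "\<epsilon> > 0" using e by (simp add: \<epsilon>_def add_nonneg_pos)
  have small: "\<epsilon> * norm w < e"
  proof -
    have p: "norm w + 1 > 0" by (simp add: add_nonneg_pos)
    have "e * norm w < e * (norm w + 1)" using e by simp
    then show ?thesis unfolding \<epsilon>_def using p by (simp add: pos_divide_less_eq)
  qed
  have "dist (k' - \<epsilon> *\<^sub>R w) k' < e" using small \<epsilon> by (simp add: dist_norm)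
  then have kme: "sg k0 (k' - \<epsilon> *\<^sub>R w)" using e by blast
  have seg: "sg k0 (k' + t *\<^sub>R w)" if t: "t \<in> {-\<epsilon>..1}" for t
  proof (cases "t \<ge> 0")
    case True
    then have "t \<in> {0..1}" using t by simp
    from P_conv[OF k' v this] show ?thesis by (simp add: w_def algebra_simps)
  next
    case False
    define s where "s = - t / \<epsilon>"
    have s: "s \<in> {0..1}" using t False \<epsilon> by (auto simp: s_def field_simps)
    have st: "s * \<epsilon> = - t" using \<epsilon> by (simp add: s_def)
    from P_conv[OF k' kme s] have "sg k0 ((1 - s) *\<^sub>R k' + s *\<^sub>R (k' - \<epsilon> *\<^sub>R w))" .
    moreover have "(1 - s) *\<^sub>R k' + s *\<^sub>R (k' - \<epsilon> *\<^sub>R w) = k' - (s * \<epsilon>) *\<^sub>R w"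
      by (simp add: algebra_simps)
    ultimately show ?thesis using st by simp
  qed
  have hz: "h *v (k' + t *\<^sub>R w) = a + t *\<^sub>R b" for t
    by (simp add: a_def b_def algebra_simps)
  have clz: "a + t *\<^sub>R b \<in> closure {v. sg k0 v}" if "t \<in> {-\<epsilon>..1}" for t
    using lim_cl[OF Mp lim seg[OF that]] hz by simp
  have nz: "a + t *\<^sub>R b \<noteq> 0" for t
  proof
    assume "a + t *\<^sub>R b = 0"
    then have "1 *\<^sub>R a + t *\<^sub>R b = 0" by simp
    then show False using indab[unfolded ind_def, rule_format, of 1 t] by simp
  qed
  define S where "S = (\<lambda>t. span {a + t *\<^sub>R b}) ` {-\<epsilon><..<1}"
  define L where "L = line_of a b"
  have LL: "L \<in> proj_lines" unfolding L_def by (rule line_of_lines[OF indab])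
  have zL: "span {a + t *\<^sub>R b} \<in> L" for t
  proof -
    have "a + t *\<^sub>R b \<in> span {a, b}" using in_span2[of "a + t *\<^sub>R b" a b] by (metis scaleR_one)
    then show ?thesis unfolding L_def using mem_line_of[OF nz] by blast
  qed
  have SL: "S \<subseteq> L" unfolding S_def using zL by blast
  have cm: "continuous_map euclideanreal proj_top (\<lambda>t. span {a + t *\<^sub>R b})"
    unfolding continuous_map_def
  proof (intro conjI allI impI)
    show "(\<lambda>t. span {a + t *\<^sub>R b}) \<in> topspace euclideanreal \<rightarrow> topspace proj_top"
    proof (rule funcsetI)
      fix t :: real
      show "span {a + t *\<^sub>R b} \<in> topspace proj_top"
        unfolding topspace_proj_top proj_points_iff using nz[of t] by blast
    qed
  next
    fix U :: "(real^'n) set set" assume "openin proj_top U"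
    then have oU: "open {v. v \<noteq> 0 \<and> span {v} \<in> U}" by (simp add: openin_proj_top proj_open_def)
    have eq: "{x \<in> topspace euclideanreal. span {a + x *\<^sub>R b} \<in> U} = (\<lambda>t. a + t *\<^sub>R b) -` {v. v \<noteq> 0 \<and> span {v} \<in> U}"
      by (simp add: set_eq_iff nz)
    have "open ((\<lambda>t. a + t *\<^sub>R b) -` {v. v \<noteq> 0 \<and> span {v} \<in> U})"
      by (rule open_line_vimage[OF oU])
    then show "openin euclideanreal {x \<in> topspace euclideanreal. span {a + x *\<^sub>R b} \<in> U}"
      unfolding eq by (simp only: open_openin)
  qed
  have conS: "connectedin proj_top S" unfolding S_def
    by (rule connectedin_continuous_map_image[OF cm]) simp
  have Sfr: "S \<subseteq> proj_top frontier_of \<Omega>"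
  proof
    fix q assume "q \<in> S"
    then obtain t where t: "t \<in> {-\<epsilon><..<1}" "q = span {a + t *\<^sub>R b}" unfolding S_def by blast
    define z where "z = a + t *\<^sub>R b"
    have t': "t \<in> {-\<epsilon>..1}" using t by auto
    have zcl: "z \<in> closure {v. sg k0 v}" unfolding z_def by (rule clz[OF t'])
    have zz: "z \<noteq> 0" unfolding z_def by (rule nz)
    have qcl: "q \<in> proj_top closure_of \<Omega>"
      unfolding t(2) z_def[symmetric] closure_char[OF zz]
    proof (intro allI impI)
      fix e' :: real assume "e' > 0"
      then obtain y where y: "y \<in> {v. sg k0 v}" "dist y z < e'" using zcl unfolding closure_approachable by blast
      then have "y \<in> C" using sg_ends by blast
      then show "\<exists>u. u \<noteq> 0 \<and> span {u} \<in> \<Omega> \<and> dist u z < e'" using y(2) by (auto simp: C_def)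
    qed
    have qn: "q \<notin> \<Omega>"
    proof
      assume "q \<in> \<Omega>"
      then have zC: "z \<in> C" using t(2) zz by (simp add: C_def z_def)
      have "sg k0 a"
      proof (cases "sg k0 z")
        case False
        then have "sg k0 (- z)" using arc[OF k0C zC] by blast
        from P_int_cl[OF this zcl] have "sg k0 0" by simp
        then show ?thesis using sg_ends C_nz by blast
      next
        case True
        show ?thesis
        proof (cases "t = 0")
          case True then show ?thesis using \<open>sg k0 z\<close> by (simp add: z_def)
        next
          case False
          show ?thesis
          proof (cases "t > 0")
            case True
            define \<alpha> where "\<alpha> = \<epsilon> / (t + \<epsilon>)"
            define \<beta> where "\<beta> = t / (t + \<epsilon>)"
            have te: "t + \<epsilon> > 0" using True \<epsilon> by simp
            have \<alpha>: "\<alpha> > 0" using te \<epsilon> by (simp add: \<alpha>_def)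
            have \<beta>: "\<beta> > 0" using te True by (simp add: \<beta>_def)
            have x1: "sg k0 (\<alpha> *\<^sub>R z)" using P_cone[OF \<open>sg k0 z\<close> \<alpha>] .
            have x2: "h *v (\<beta> *\<^sub>R (k' - \<epsilon> *\<^sub>R w)) \<in> closure {v. sg k0 v}"
              by (rule lim_cl[OF Mp lim P_cone[OF kme \<beta>]])
            have e2: "h *v (\<beta> *\<^sub>R (k' - \<epsilon> *\<^sub>R w)) = \<beta> *\<^sub>R (a - \<epsilon> *\<^sub>R b)"
              by (simp add: a_def b_def algebra_simps)
            have comb: "\<alpha> *\<^sub>R z + \<beta> *\<^sub>R (a - \<epsilon> *\<^sub>R b) = (\<alpha> + \<beta>) *\<^sub>R a + (\<alpha> * t - \<beta> * \<epsilon>) *\<^sub>R b"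
              by (simp add: z_def algebra_simps)
            have "\<alpha> + \<beta> = (\<epsilon> + t) / (t + \<epsilon>)" by (simp add: \<alpha>_def \<beta>_def add_divide_distrib)
            then have c1: "\<alpha> + \<beta> = 1" using te by (simp add: add.commute)
            have c2: "\<alpha> * t - \<beta> * \<epsilon> = 0" using te by (simp add: \<alpha>_def \<beta>_def field_simps)
            have "sg k0 (\<alpha> *\<^sub>R z + h *v (\<beta> *\<^sub>R (k' - \<epsilon> *\<^sub>R w)))" by (rule P_int_cl[OF x1 x2])
            then show ?thesis using e2 comb c1 c2 by simp
          next
            case False
            then have tn: "t < 0" using \<open>t \<noteq> 0\<close> by simp
            define \<alpha> where "\<alpha> = 1 / (1 - t)"
            define \<beta> where "\<beta> = - t / (1 - t)"
            have te: "1 - t > 0" using tn by simp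
            have \<alpha>: "\<alpha> > 0" using te by (simp add: \<alpha>_def)
            have \<beta>: "\<beta> > 0" using te tn by (simp add: \<beta>_def divide_neg_pos)
            have x1: "sg k0 (\<alpha> *\<^sub>R z)" using P_cone[OF \<open>sg k0 z\<close> \<alpha>] .
            have x2: "h *v (\<beta> *\<^sub>R v) \<in> closure {v. sg k0 v}"
              by (rule lim_cl[OF Mp lim P_cone[OF v \<beta>]])
            have e2: "h *v (\<beta> *\<^sub>R v) = \<beta> *\<^sub>R (a + b)"
              using hv by (simp add: algebra_simps)
            have comb: "\<alpha> *\<^sub>R z + \<beta> *\<^sub>R (a + b) = (\<alpha> + \<beta>) *\<^sub>R a + (\<alpha> * t + \<beta>) *\<^sub>R b"
              by (simp add: z_def algebra_simps)
            have c1: "\<alpha> + \<beta> = 1" using te by (simp add: \<alpha>_def \<beta>_def field_simps)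
            have c2: "\<alpha> * t + \<beta> = 0" using te by (simp add: \<alpha>_def \<beta>_def field_simps)
            have "sg k0 (\<alpha> *\<^sub>R z + h *v (\<beta> *\<^sub>R v))" by (rule P_int_cl[OF x1 x2])
            then show ?thesis using e2 comb c1 c2 by simp
          qed
        qed
      qed
      then have "a \<in> C" using sg_ends by blast
      then have "span {a} \<in> \<Omega>" by (simp add: C_def)
      moreover have "span {a} \<in> proj_top frontier_of \<Omega>" using ext by (simp add: proj_Ext_def a_def)
      ultimately show False using frontier_not_in by blast
    qed
    show "q \<in> proj_top frontier_of \<Omega>"
      using qcl qn interior_of_openin[OF opn] by (simp add: frontier_of_def)
  qed
  have intS: "span {a} \<in> (subtopology proj_top L) interior_of S"
  proof -
    obtain f g where fg: "linear f" "linear g" "continuous_on UNIV f" "continuous_on UNIV g"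
      "\<And>\<alpha> \<beta>. f (\<alpha> *\<^sub>R a + \<beta> *\<^sub>R b) = \<alpha>" "\<And>\<alpha> \<beta>. g (\<alpha> *\<^sub>R a + \<beta> *\<^sub>R b) = \<beta>"
      using dual2[OF indab] by blast
    have fs: "f (c *\<^sub>R u) = c * f u" "g (c *\<^sub>R u) = c * g u" for c u
      using linear_cmul[OF fg(1)] linear_cmul[OF fg(2)] by auto
    have f0: "f 0 = 0" "g 0 = 0" using linear_0[OF fg(1)] linear_0[OF fg(2)] by auto
    define Q where "Q = {u. 0 < f u * f u} \<inter> {u. - \<epsilon> * (f u * f u) < f u * g u} \<inter> {u. f u * g u < f u * f u}"
    have oQ: "open Q" unfolding Q_def
      by (intro open_Int open_Collect_less continuous_intros fg(3,4))
    have zQ: "0 \<notin> Q" using f0 by (simp add: Q_def)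
    have sQ: "c *\<^sub>R u \<in> Q" if "u \<in> Q" "c \<noteq> 0" for u c
    proof -
      have c2: "c * c > 0" using that(2) not_real_square_gt_zero[of c] by blast
      have e1: "f (c *\<^sub>R u) * f (c *\<^sub>R u) = (c * c) * (f u * f u)" by (simp add: fs algebra_simps)
      have e2: "f (c *\<^sub>R u) * g (c *\<^sub>R u) = (c * c) * (f u * g u)" by (simp add: fs algebra_simps)
      have i1: "0 < f u * f u" "- \<epsilon> * (f u * f u) < f u * g u" "f u * g u < f u * f u"
        using that(1) by (auto simp: Q_def)
      have "0 < (c * c) * (f u * f u)" using c2 i1(1) by simp
      moreover have "- \<epsilon> * ((c * c) * (f u * f u)) < (c * c) * (f u * g u)"
        using mult_strict_left_mono[OF i1(2) c2] by (simp add: algebra_simps)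
      moreover have "(c * c) * (f u * g u) < (c * c) * (f u * f u)"
        using mult_strict_left_mono[OF i1(3) c2] by simp
      ultimately show ?thesis unfolding Q_def using e1 e2 by simp
    qed
    define E where "E = (\<lambda>u. span {u}) ` Q"
    have oE: "openin proj_top E" unfolding E_def by (rule sat_open[OF oQ zQ sQ])
    have mE: "span {u} \<in> E \<longleftrightarrow> u \<in> Q" if "u \<noteq> 0" for u
      unfolding E_def by (rule sat_open_mem[OF zQ sQ that])
    define T where "T = E \<inter> L"
    have oT: "openin (subtopology proj_top L) T" unfolding T_def openin_subtopology
      by (rule exI[of _ E]) (simp add: oE)
    have fa: "f a = 1" "g a = 0" using fg(5)[of 1 0] fg(6)[of 1 0] by simp_all
    have "a \<in> Q" using fa \<epsilon> by (simp add: Q_def)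
    then have aT: "span {a} \<in> T" unfolding T_def using mE[OF anz'] zL[of 0] by simp
    have TS: "T \<subseteq> S"
    proof
      fix q assume "q \<in> T"
      then have qE: "q \<in> E" and qL: "q \<in> L" by (auto simp: T_def)
      obtain u where u: "u \<noteq> 0" "q = span {u}" "u \<in> span {a, b}" using line_of_elem qL unfolding L_def by blast
      obtain \<alpha> \<beta> where u2: "u = \<alpha> *\<^sub>R a + \<beta> *\<^sub>R b" using u(3) in_span2[of u a b] by blast
      have uQ: "u \<in> Q" using mE[OF u(1)] qE u(2) by simp
      have fu: "f u = \<alpha>" "g u = \<beta>" using fg(5,6) u2 by simp_all
      have i1: "0 < \<alpha> * \<alpha>" "- \<epsilon> * (\<alpha> * \<alpha>) < \<alpha> * \<beta>" "\<alpha> * \<beta> < \<alpha> * \<alpha>"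
        using uQ fu by (auto simp: Q_def)
      have anz: "\<alpha> \<noteq> 0" using i1(1) by auto
      define t where "t = \<beta> / \<alpha>"
      have tt: "\<alpha> * \<beta> = t * (\<alpha> * \<alpha>)" using anz by (simp add: t_def)
      have "- \<epsilon> < t" using i1(1,2) tt by (metis mult_less_cancel_right_pos)
      moreover have "t < 1" using i1(1,3) tt by (metis mult_less_cancel_right_pos mult_1)
      ultimately have tI: "t \<in> {-\<epsilon><..<1}" by simp
      have "u = \<alpha> *\<^sub>R (a + t *\<^sub>R b)" using u2 anz by (simp add: t_def algebra_simps)
      then have "span {u} = span {a + t *\<^sub>R b}" using span1_eq[OF u(1) nz[of t]] anz by blast
      then show "q \<in> S" unfolding S_def using u(2) tI by blast
    qed
    show ?thesis unfolding interior_of_def by (intro CollectI exI[of _ T] conjI oT aT TS)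
  qed
  have "\<exists>L\<in>proj_lines. \<exists>S. S \<subseteq> L \<and> connectedin proj_top S \<and> S \<subseteq> proj_top frontier_of \<Omega> \<and>
          span {a} \<in> (subtopology proj_top L) interior_of S"
    by (rule bexI[OF _ LL], rule exI[of _ S]) (intro conjI SL conS Sfr intS)
  moreover have "\<not> (\<exists>L\<in>proj_lines. \<exists>S. S \<subseteq> L \<and> connectedin proj_top S \<and> S \<subseteq> proj_top frontier_of \<Omega> \<and>
          span {a} \<in> (subtopology proj_top L) interior_of S)"
    using ext by (simp add: proj_Ext_def a_def)
  ultimately show False by blast
qed

end

lemma par_sym: "par a b \<Longrightarrow> par b a"
  unfolding par_def by (metis mult.commute)

locale mc = pc \<Omega> for \<Omega> :: "(real^'n) set set" +
  fixes G :: "(real^'n^'n) set"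
  assumes grp: "matrix_group G" and aut: "in_Aut G \<Omega>"
begin

lemma G_inv: "A \<in> G \<Longrightarrow> invertible A"
  using grp by (simp add: matrix_group_def)

lemma G_C: assumes "A \<in> G" "v \<in> C" shows "A *v v \<in> C"
proof -
  have "span {v} \<in> \<Omega>" using assms(2) by (simp add: C_def)
  then have "proj_act A (span {v}) \<in> \<Omega>" using aut assms(1) unfolding in_Aut_def by blast
  moreover have "A *v v \<noteq> 0" using inv_nz[OF G_inv[OF assms(1)]] C_nz[OF assms(2)] .
  ultimately show ?thesis by (simp add: proj_act_span C_def)
qed

lemma sg_lin: assumes "A \<in> G" "sg a b" shows "sg (A *v a) (A *v b)"
  unfolding sg_def
proof
  fix t :: real assume "t \<in> {0..1}"
  then have "(1 - t) *\<^sub>R a + t *\<^sub>R b \<in> C" using assms(2) by (simp add: sg_def)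
  then have "A *v ((1 - t) *\<^sub>R a + t *\<^sub>R b) \<in> C" by (rule G_C[OF assms(1)])
  then show "(1 - t) *\<^sub>R (A *v a) + t *\<^sub>R (A *v b) \<in> C" by (simp add: algebra_simps)
qed

lemma sg_negate: assumes "sg a b" shows "sg (- a) (- b)"
  unfolding sg_def
proof
  fix t :: real assume "t \<in> {0..1}"
  then have "(1 - t) *\<^sub>R a + t *\<^sub>R b \<in> C" using assms by (simp add: sg_def)
  then have "- ((1 - t) *\<^sub>R a + t *\<^sub>R b) \<in> C" by (rule C_neg)
  then show "(1 - t) *\<^sub>R (- a) + t *\<^sub>R (- b) \<in> C" by (simp add: algebra_simps)
qed

lemma G_sign:
  assumes k0C: "k0 \<in> C" and A: "A \<in> G"
  shows "\<exists>\<sigma>::real. (\<sigma> = 1 \<or> \<sigma> = -1) \<and> (\<forall>v. sg k0 v \<longrightarrow> sg k0 (\<sigma> *\<^sub>R (A *v v)))"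
proof -
  have AC: "A *v k0 \<in> C" by (rule G_C[OF A k0C])
  from arc[OF k0C AC] show ?thesis
  proof
    assume h: "sg k0 (A *v k0)"
    have "sg k0 (1 *\<^sub>R (A *v v))" if "sg k0 v" for v
      using sg_trans[OF h sg_lin[OF A that]] by simp
    then show ?thesis by blast
  next
    assume h: "sg k0 (- (A *v k0))"
    have "sg k0 ((-1) *\<^sub>R (A *v v))" if "sg k0 v" for v
      using sg_trans[OF h sg_negate[OF sg_lin[OF A that]]] by simp
    then show ?thesis by blast
  qed
qed

lemma lift:
  assumes K: "compactin proj_top K" "K \<subseteq> \<Omega>"
  shows "\<exists>Kv. compact Kv \<and> Kv \<subseteq> C \<and> (\<forall>q\<in>K. \<exists>v\<in>Kv. q = span {v})"
proof -
  define I where "I = {(v, r). r > 0 \<and> cball v r \<subseteq> C}"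
  define f where "f = (\<lambda>(v::real^'n, r::real). (\<lambda>u. span {u}) ` ball v r)"
  define U where "U = f ` I"
  have oU: "\<forall>E\<in>U. openin proj_top E"
  proof
    fix E assume "E \<in> U"
    then obtain v r where vr: "(v, r) \<in> I" "E = (\<lambda>u. span {u}) ` ball v r" unfolding U_def f_def by auto
    have "ball v r \<subseteq> C" using vr(1) ball_subset_cball unfolding I_def by blast
    then have "0 \<notin> ball v r" using C_nz by blast
    then show "openin proj_top E" unfolding vr(2) by (rule ball_proj_open)
  qed
  have cov: "K \<subseteq> \<Union>U"
  proof
    fix q assume "q \<in> K"
    then have "q \<in> \<Omega>" using K(2) by blast
    moreover have "\<Omega> \<subseteq> proj_points" using cvx by (simp add: proj_convex_def)
    ultimately have "q \<in> proj_points" by blast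
    then obtain v where v: "v \<noteq> 0" "q = span {v}" unfolding proj_points_iff by blast
    then have vC: "v \<in> C" using \<open>q \<in> \<Omega>\<close> by (simp add: C_def)
    then obtain r where r: "r > 0" "ball v r \<subseteq> C" using C_open open_contains_ball by blast
    have "cball v (r / 2) \<subseteq> ball v r" using r by (simp add: cball_subset_ball_iff)
    then have "cball v (r / 2) \<subseteq> C" using r(2) by blast
    then have "(v, r / 2) \<in> I" using r by (simp add: I_def)
    moreover have "q \<in> f (v, r / 2)" using v r by (simp add: f_def)
    ultimately show "q \<in> \<Union>U" unfolding U_def by blast
  qed
  have "\<forall>\<U>. (\<forall>U \<in> \<U>. openin proj_top U) \<and> K \<subseteq> \<Union>\<U> \<longrightarrow> (\<exists>\<F>. finite \<F> \<and> \<F> \<subseteq> \<U> \<and> K \<subseteq> \<Union>\<F>)"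
    using K(1) unfolding compactin_def by blast
  then have "\<exists>\<F>. finite \<F> \<and> \<F> \<subseteq> U \<and> K \<subseteq> \<Union>\<F>" using oU cov by blast
  then obtain F where F: "finite F" "F \<subseteq> U" "K \<subseteq> \<Union>F" by blast
  obtain F' where F': "F' \<subseteq> I" "finite F'" "F = f ` F'"
    using finite_subset_image[OF F(1) F(2)[unfolded U_def]] by blast
  define Kv where "Kv = (\<Union>x\<in>F'. cball (fst x) (snd x))"
  have "compact Kv" unfolding Kv_def using F'(2) by (intro compact_UN) auto
  moreover have "Kv \<subseteq> C"
  proof
    fix u assume "u \<in> Kv"
    then obtain x where x: "x \<in> F'" "u \<in> cball (fst x) (snd x)" unfolding Kv_def by blast
    then have "x \<in> I" using F'(1) by blast
    then have "cball (fst x) (snd x) \<subseteq> C" unfolding I_def by (cases x) simp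
    then show "u \<in> C" using x(2) by blast
  qed
  moreover have "\<forall>q\<in>K. \<exists>v\<in>Kv. q = span {v}"
  proof
    fix q assume "q \<in> K"
    then obtain x where x: "x \<in> F'" "q \<in> f x" using F(3) F'(3) by blast
    obtain v r where vr: "x = (v, r)" by fastforce
    then obtain u where u: "u \<in> ball v r" "q = span {u}" using x(2) unfolding f_def by auto
    have "u \<in> cball (fst x) (snd x)" using vr u(1) by simp
    then have "u \<in> Kv" unfolding Kv_def using x(1) by blast
    then show "\<exists>v\<in>Kv. q = span {v}" using u(2) by blast
  qed
  ultimately show ?thesis by blast
qed

end

context mc begin

lemma key:
  assumes coc: "acts_cocompactly G \<Omega>" and pE: "p \<in> proj_Ext \<Omega>"
  shows "\<exists>p0 h g c. p0 \<noteq> 0 \<and> p = span {p0} \<and> (\<forall>v\<in>C. h *v v \<noteq> 0) \<and> h \<noteq> 0 \<and>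
     (\<forall>u. h *v u \<in> span {p0}) \<and> (\<forall>n. g n \<in> G) \<and> (\<forall>n. c n \<noteq> (0::real)) \<and>
     (\<forall>x. (\<lambda>n. c n *\<^sub>R (g n *v x)) \<longlonglongrightarrow> h *v x)"
proof -
  have pfr: "p \<in> proj_top frontier_of \<Omega>" using pE by (simp add: proj_Ext_def)
  have pcl: "p \<in> proj_top closure_of \<Omega>" by (rule frontier_cl[OF pfr])
  have pnO: "p \<notin> \<Omega>" by (rule frontier_not_in[OF pfr])
  have "p \<in> proj_points" using pcl closure_of_subset_topspace[of proj_top \<Omega>] by (auto simp: topspace_proj_top)
  then obtain p0 where p0: "p0 \<noteq> 0" "p = span {p0}" unfolding proj_points_iff by blast
  obtain K where K: "compactin proj_top K" "K \<subseteq> \<Omega>" "\<Omega> = (\<Union>A\<in>G. proj_act A ` K)"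
    using coc unfolding acts_cocompactly_def by blast
  obtain Kv where Kv: "compact Kv" "Kv \<subseteq> C" "\<forall>q\<in>K. \<exists>v\<in>Kv. q = span {v}" using lift[OF K(1,2)] by blast
  have "\<forall>m::nat. \<exists>y. y \<noteq> 0 \<and> span {y} \<in> \<Omega> \<and> dist y p0 < 1 / (real m + 1)"
  proof
    fix m :: nat
    have "1 / (real m + 1) > 0" by simp
    then show "\<exists>y. y \<noteq> 0 \<and> span {y} \<in> \<Omega> \<and> dist y p0 < 1 / (real m + 1)"
      using pcl unfolding p0(2) closure_char[OF p0(1)] by blast
  qed
  then obtain y where y: "\<And>m. y m \<noteq> 0" "\<And>m. span {y m} \<in> \<Omega>" "\<And>m. dist (y m) p0 < 1 / (real m + 1)"
    by metis
  have "\<forall>m. \<exists>A v. A \<in> G \<and> v \<in> Kv \<and> span {y m} = span {A *v v}"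
  proof
    fix m
    have "span {y m} \<in> (\<Union>A\<in>G. proj_act A ` K)" using y(2) K(3) by simp
    then obtain A q where Aq: "A \<in> G" "q \<in> K" "span {y m} = proj_act A q" by blast
    then obtain v where "v \<in> Kv" "q = span {v}" using Kv(3) by blast
    then show "\<exists>A v. A \<in> G \<and> v \<in> Kv \<and> span {y m} = span {A *v v}"
      using Aq by (metis proj_act_span)
  qed
  then obtain gg kk where gk: "\<And>m. gg m \<in> G" "\<And>m. kk m \<in> Kv" "\<And>m. span {y m} = span {gg m *v kk m}"
    by metis
  define k0 where "k0 = kk 0"
  have k0C: "k0 \<in> C" using gk(2) Kv(2) by (auto simp: k0_def)
  have "\<forall>m. \<exists>\<sigma>::real. (\<sigma> = 1 \<or> \<sigma> = -1) \<and> (\<forall>v. sg k0 v \<longrightarrow> sg k0 (\<sigma> *\<^sub>R (gg m *v v)))"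
    using G_sign[OF k0C gk(1)] by blast
  then obtain \<sigma> where \<sigma>: "\<And>m. \<sigma> m = 1 \<or> \<sigma> m = -1" "\<And>m v. sg k0 v \<Longrightarrow> sg k0 (\<sigma> m *\<^sub>R (gg m *v v))"
    by metis
  have ng: "norm (gg m) > 0" for m using inv_nz_mat[OF G_inv[OF gk(1)]] by simp
  define cc where "cc m = \<sigma> m / norm (gg m)" for m
  have cc0: "cc m \<noteq> 0" for m using \<sigma>(1)[of m] ng[of m] by (auto simp: cc_def)
  define M where "M m = cc m *\<^sub>R gg m" for m
  have Mv: "M m *v v = cc m *\<^sub>R (gg m *v v)" for m v
    by (simp add: M_def scaleR_matrix_vector_assoc)
  have Mp: "sg k0 (M m *v v)" if "sg k0 v" for m v
  proof -
    have pos: "1 / norm (gg m) > 0" using ng[of m] by simp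
    have "sg k0 ((1 / norm (gg m)) *\<^sub>R (\<sigma> m *\<^sub>R (gg m *v v)))"
      by (rule P_cone[OF \<sigma>(2)[OF that] pos])
    moreover have "(1 / norm (gg m)) *\<^sub>R (\<sigma> m *\<^sub>R (gg m *v v)) = M m *v v" by (simp add: Mv cc_def)
    ultimately show ?thesis by simp
  qed
  have nM: "norm (M m) = 1" for m
    using \<sigma>(1)[of m] ng[of m] by (auto simp: M_def cc_def)
  define fseq where "fseq m = (M m, kk m)" for m
  have "compact (sphere (0::real^'n^'n) 1 \<times> Kv)" by (intro compact_Times compact_sphere Kv(1))
  then have "seq_compact (sphere (0::real^'n^'n) 1 \<times> Kv)" by (rule compact_imp_seq_compact)
  moreover have "\<forall>m. fseq m \<in> sphere (0::real^'n^'n) 1 \<times> Kv" using nM gk(2) by (simp add: fseq_def)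
  ultimately obtain l r where lr: "l \<in> sphere (0::real^'n^'n) 1 \<times> Kv" "strict_mono r" "(fseq \<circ> r) \<longlonglongrightarrow> l"
    by (rule seq_compactE)
  obtain h k where hk: "l = (h, k)" by fastforce
  have limM: "(\<lambda>n. M (r n)) \<longlonglongrightarrow> h"
    using tendsto_fst[OF lr(3)] hk by (simp add: fseq_def o_def)
  have limk: "(\<lambda>n. kk (r n)) \<longlonglongrightarrow> k"
    using tendsto_snd[OF lr(3)] hk by (simp add: fseq_def o_def)
  have hnz: "h \<noteq> 0" using lr(1) hk by auto
  have kC: "k \<in> C" using lr(1) hk Kv(2) by auto
  have Mpr: "\<And>n v. sg k0 v \<Longrightarrow> sg k0 (M (r n) *v v)" using Mp by blast
  have kerh: "\<forall>v\<in>C. h *v v \<noteq> 0" using ker[OF k0C Mpr limM hnz] by blast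
  have limy: "(\<lambda>n. y (r n)) \<longlonglongrightarrow> p0"
  proof (rule metric_LIMSEQ_I)
    fix e :: real assume e: "e > 0"
    obtain N where N: "N > 0" "inverse (real N) < e" using ex_inverse_of_nat_less[OF e] by blast
    have "\<forall>n\<ge>N. dist (y (r n)) p0 < e"
    proof (intro allI impI)
      fix n assume "n \<ge> N"
      then have "real N \<le> real (r n) + 1" using seq_suble[OF lr(2), of n] by simp
      then have "1 / (real (r n) + 1) \<le> inverse (real N)" using N(1)
        by (simp add: inverse_eq_divide frac_le)
      then show "dist (y (r n)) p0 < e" using y(3)[of "r n"] N(2) by linarith
    qed
    then show "\<exists>no. \<forall>n\<ge>no. dist (y (r n)) p0 < e" by blast
  qed
  have Mk_nz: "M m *v kk m \<noteq> 0" for m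
  proof -
    have "kk m \<noteq> 0" using gk(2) Kv(2) C_nz by blast
    then have "gg m *v kk m \<noteq> 0" using inv_nz[OF G_inv[OF gk(1)]] by blast
    then show ?thesis using cc0 by (simp add: Mv)
  qed
  have parn: "par (y (r n)) (M (r n) *v kk (r n))" for n
  proof -
    have "span {M (r n) *v kk (r n)} = span {gg (r n) *v kk (r n)}"
      using span1_eq[OF Mk_nz] cc0 Mv Mk_nz by (metis scaleR_eq_0_iff)
    then show ?thesis using span_par[OF y(1) Mk_nz] gk(3) by metis
  qed
  have limMk: "(\<lambda>n. M (r n) *v kk (r n)) \<longlonglongrightarrow> h *v k" by (rule tendsto_mv[OF limM limk])
  have "par p0 (h *v k)" by (rule par_limit[OF parn limy limMk])
  then have hkp: "span {h *v k} = span {p0}" using par_span_eq[OF _ p0(1)] kerh kC par_sym by metis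
  obtain k' where k': "sg k0 k'" "k' = k \<or> k' = - k" using arc[OF k0C kC] by blast
  have k'C: "k' \<in> C" using sg_ends[OF k'(1)] by blast
  have hk'nz: "h *v k' \<noteq> 0" using kerh k'C by blast
  have hk'span: "span {h *v k'} = span {p0}"
  proof (cases "k' = k")
    case True then show ?thesis using hkp by simp
  next
    case False
    then have "k' = - k" using k'(2) by blast
    then have "h *v k' = (-1) *\<^sub>R (h *v k)" by (simp add: matrix_vector_mult_scaleR[symmetric])
    then show ?thesis using hkp span1_eq[OF hk'nz, of "h *v k"] kerh kC by (metis neg_equal_0_iff_equal one_neq_zero)
  qed
  have pext: "span {h *v k'} \<in> proj_Ext \<Omega>" using pE p0(2) hk'span by simp
  have inC: "h *v v \<in> span {p0}" if "v \<in> C" for v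
  proof (cases "sg k0 v")
    case True
    then show ?thesis using ext_core[OF k0C Mpr limM k'(1) True hk'nz pext] hk'span by simp
  next
    case False
    then have "sg k0 (- v)" using arc[OF k0C that] by blast
    then have "h *v (- v) \<in> span {p0}" using ext_core[OF k0C Mpr limM k'(1) _ hk'nz pext] hk'span by simp
    then have "(-1) *\<^sub>R (h *v (- v)) \<in> span {p0}" by (rule span_scale)
    then show ?thesis by (simp add: matrix_vector_mult_scaleR[symmetric])
  qed
  have allu: "h *v u \<in> span {p0}" for u
  proof -
    obtain e where e: "e > 0" "ball k e \<subseteq> C" using C_open kC open_contains_ball by blast
    define \<delta> where "\<delta> = e / (norm u + 1)"
    have \<delta>: "\<delta> > 0" using e by (simp add: \<delta>_def add_nonneg_pos)
    have small: "\<delta> * norm u < e"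
    proof -
      have pp: "norm u + 1 > 0" by (simp add: add_nonneg_pos)
      have "e * norm u < e * (norm u + 1)" using e by simp
      then show ?thesis unfolding \<delta>_def using pp by (simp add: pos_divide_less_eq)
    qed
    have "k + \<delta> *\<^sub>R u \<in> ball k e" using small \<delta> by (simp add: dist_norm)
    then have "k + \<delta> *\<^sub>R u \<in> C" using e by blast
    then have "h *v (k + \<delta> *\<^sub>R u) - h *v k \<in> span {p0}" using inC kC by (intro span_diff) auto
    then have "(1 / \<delta>) *\<^sub>R (h *v (k + \<delta> *\<^sub>R u) - h *v k) \<in> span {p0}" by (rule span_scale)
    moreover have "(1 / \<delta>) *\<^sub>R (h *v (k + \<delta> *\<^sub>R u) - h *v k) = h *v u"
      using \<delta> by (simp add: algebra_simps)
    ultimately show ?thesis by simp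
  qed
  have conv: "(\<lambda>n. cc (r n) *\<^sub>R (gg (r n) *v x)) \<longlonglongrightarrow> h *v x" for x
    using tendsto_mv[OF limM tendsto_const, of x] by (simp add: Mv)
  show ?thesis
    apply (rule exI[of _ p0], rule exI[of _ h], rule exI[of _ "\<lambda>n. gg (r n)"], rule exI[of _ "\<lambda>n. cc (r n)"])
    using p0 kerh hnz allu gk(1) cc0 conv by blast
qed

end

context mc begin

lemma irred_gamma:
  assumes np: "\<not> preserves_proper_subspace G" and x0: "x0 \<noteq> 0" and hnz: "h \<noteq> 0"
  shows "\<exists>\<gamma>\<in>G. h *v (\<gamma> *v x0) \<noteq> 0"
proof (rule ccontr)
  assume "\<not> (\<exists>\<gamma>\<in>G. h *v (\<gamma> *v x0) \<noteq> 0)"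
  then have all0: "\<And>\<gamma>. \<gamma> \<in> G \<Longrightarrow> h *v (\<gamma> *v x0) = 0" by blast
  define S where "S = {A *v x0 | A. A \<in> G}"
  define W where "W = span S"
  have mul: "A ** B \<in> G" if "A \<in> G" "B \<in> G" for A B using grp that by (simp add: matrix_group_def)
  have invG: "matrix_inv A \<in> G" if "A \<in> G" for A using grp that by (simp add: matrix_group_def)
  have one: "mat 1 \<in> G" using grp by (simp add: matrix_group_def)
  have SS: "(\<lambda>v. A *v v) ` S \<subseteq> S" if "A \<in> G" for A
  proof
    fix z assume "z \<in> (\<lambda>v. A *v v) ` S"
    then obtain B where B: "B \<in> G" "z = A *v (B *v x0)" unfolding S_def by blast
    then have "z = (A ** B) *v x0" by (simp add: matrix_vector_mul_assoc)
    then show "z \<in> S" unfolding S_def using mul[OF that B(1)] by blast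
  qed
  have WW: "(\<lambda>v. A *v v) ` W \<subseteq> W" if "A \<in> G" for A
  proof -
    have "(\<lambda>v. A *v v) ` W = span ((\<lambda>v. A *v v) ` S)" unfolding W_def
      by (rule span_linear_image[symmetric]) simp
    also have "\<dots> \<subseteq> span S" by (rule span_mono[OF SS[OF that]])
    finally show ?thesis unfolding W_def .
  qed
  have img: "(\<lambda>v. A *v v) ` W = W" if "A \<in> G" for A
  proof
    show "(\<lambda>v. A *v v) ` W \<subseteq> W" by (rule WW[OF that])
  next
    show "W \<subseteq> (\<lambda>v. A *v v) ` W"
    proof
      fix w assume "w \<in> W"
      then have "matrix_inv A *v w \<in> W" using WW[OF invG[OF that]] by blast
      moreover have "A *v (matrix_inv A *v w) = w"
        using inv_props[OF G_inv[OF that]] by (simp add: matrix_vector_mul_assoc)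
      ultimately show "w \<in> (\<lambda>v. A *v v) ` W" by (metis image_eqI)
    qed
  qed
  have "x0 \<in> S" unfolding S_def using one by (metis (mono_tags, lifting) matrix_vector_mul_lid mem_Collect_eq)
  then have "x0 \<in> W" unfolding W_def by (rule span_base)
  then have Wnz: "W \<noteq> {0}" using x0 by blast
  have "subspace W" unfolding W_def by (rule subspace_span)
  then have WU: "W = UNIV" using np Wnz img unfolding preserves_proper_subspace_def by blast
  define Ker where "Ker = {u. h *v u = 0}"
  have "subspace Ker" unfolding subspace_def Ker_def by (simp add: matrix_vector_right_distrib matrix_vector_mult_scaleR)
  moreover have "S \<subseteq> Ker" unfolding S_def Ker_def using all0 by blast
  ultimately have "W \<subseteq> Ker" unfolding W_def by (rule span_minimal[rotated])
  then have "\<forall>u. h *v u = 0" using WU unfolding Ker_def by blast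
  then have "h = 0" by (subst matrix_eq) simp
  then show False using hnz by simp
qed

lemma approach:
  assumes coc: "acts_cocompactly G \<Omega>" and pE: "p \<in> proj_Ext \<Omega>" and x: "x = span {x0}" "x0 \<noteq> 0"
    and hyp: "\<And>h::real^'n^'n. h \<noteq> 0 \<Longrightarrow> (\<forall>v\<in>C. h *v v \<noteq> 0) \<Longrightarrow> \<exists>\<gamma>\<in>G. h *v (\<gamma> *v x0) \<noteq> 0"
  shows "p \<in> proj_top closure_of (orbit G x)"
proof -
  obtain p0 h g c where D: "p0 \<noteq> 0" "p = span {p0}" "\<forall>v\<in>C. h *v v \<noteq> 0" "h \<noteq> 0"
     "\<forall>u. h *v u \<in> span {p0}" "\<forall>n. g n \<in> G" "\<forall>n. c n \<noteq> (0::real)"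
     "\<forall>x. (\<lambda>n. c n *\<^sub>R (g n *v x)) \<longlonglongrightarrow> h *v x"
    using key[OF coc pE] by blast
  obtain \<gamma> where \<gamma>: "\<gamma> \<in> G" "h *v (\<gamma> *v x0) \<noteq> 0" using hyp[OF D(4) D(3)] by blast
  define y0 where "y0 = \<gamma> *v x0"
  have hy: "h *v y0 \<noteq> 0" using \<gamma> by (simp add: y0_def)
  have y0nz: "y0 \<noteq> 0" using hy by auto
  have "h *v y0 \<in> span {p0}" using D(5) by blast
  then obtain c' where c': "h *v y0 = c' *\<^sub>R p0" by (auto simp: span_singleton scaleR_conv_of_real)
  then have "c' \<noteq> 0" using hy by auto
  then have sp: "span {h *v y0} = span {p0}" using span1_eq[OF hy D(1)] c' by blast
  show ?thesis
    unfolding D(2) sp[symmetric] closure_char[OF hy]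
  proof (intro allI impI)
    fix e :: real assume e: "e > 0"
    have "\<forall>\<^sub>F n in sequentially. dist (c n *\<^sub>R (g n *v y0)) (h *v y0) < e"
      using tendstoD[OF D(8)[rule_format, of y0] e] .
    then obtain N where N: "\<And>n. n \<ge> N \<Longrightarrow> dist (c n *\<^sub>R (g n *v y0)) (h *v y0) < e"
      unfolding eventually_sequentially by blast
    define u where "u = c N *\<^sub>R (g N *v y0)"
    have gy: "g N *v y0 \<noteq> 0" using inv_nz[OF G_inv] D(6) y0nz by blast
    have unz: "u \<noteq> 0" using gy D(7) by (simp add: u_def)
    have "span {u} = span {g N *v y0}" using span1_eq[OF unz gy] D(7) by (auto simp: u_def)
    also have "\<dots> = proj_act (g N ** \<gamma>) x" using x(1) by (simp add: proj_act_span y0_def matrix_vector_mul_assoc)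
    finally have "span {u} \<in> orbit G x"
      unfolding orbit_def using grp D(6) \<gamma>(1) by (auto simp: matrix_group_def)
    then show "\<exists>u. u \<noteq> 0 \<and> span {u} \<in> orbit G x \<and> dist u (h *v y0) < e"
      using unz N[of N] unfolding u_def[symmetric] by blast
  qed
qed

end

theorem lemma5p5:
  fixes \<Omega> :: "(real^'n) set set" and G :: "(real^'n^'n) set"
  assumes "openin proj_top \<Omega>" and "proj_convex \<Omega>" and "proj_proper \<Omega>"
    and "matrix_group G" and "in_Aut G \<Omega>" and "acts_cocompactly G \<Omega>"
  shows "(\<forall>x\<in>\<Omega>. proj_Ext \<Omega> \<subseteq> proj_top closure_of (orbit G x)) \<and>
         (\<not> preserves_proper_subspace G \<longrightarrow>
            (\<forall>x\<in>proj_top closure_of \<Omega>. proj_Ext \<Omega> \<subseteq> proj_top closure_of (orbit G x)))"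
proof -
  interpret mc \<Omega> G by unfold_locales (use assms in auto)
  have P1: "proj_Ext \<Omega> \<subseteq> proj_top closure_of (orbit G x)" if xO: "x \<in> \<Omega>" for x
  proof
    fix p assume pE: "p \<in> proj_Ext \<Omega>"
    have "\<Omega> \<subseteq> proj_points" using assms(2) by (simp add: proj_convex_def)
    then have "x \<in> proj_points" using xO by blast
    then obtain x0 where x0: "x0 \<noteq> 0" "x = span {x0}" unfolding proj_points_iff by blast
    then have x0C: "x0 \<in> C" using xO by (simp add: C_def)
    show "p \<in> proj_top closure_of (orbit G x)"
    proof (rule approach[OF assms(6) pE x0(2) x0(1)])
      fix h :: "real^'n^'n" assume "\<forall>v\<in>C. h *v v \<noteq> 0"
      then have "h *v (mat 1 *v x0) \<noteq> 0" using x0C by simp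
      moreover have "mat 1 \<in> G" using assms(4) by (simp add: matrix_group_def)
      ultimately show "\<exists>\<gamma>\<in>G. h *v (\<gamma> *v x0) \<noteq> 0" by blast
    qed
  qed
  have P2: "proj_Ext \<Omega> \<subseteq> proj_top closure_of (orbit G x)"
    if np: "\<not> preserves_proper_subspace G" and xc: "x \<in> proj_top closure_of \<Omega>" for x
  proof
    fix p assume pE: "p \<in> proj_Ext \<Omega>"
    have "x \<in> proj_points" using xc closure_of_subset_topspace[of proj_top \<Omega>] by (auto simp: topspace_proj_top)
    then obtain x0 where x0: "x0 \<noteq> 0" "x = span {x0}" unfolding proj_points_iff by blast
    show "p \<in> proj_top closure_of (orbit G x)"
    proof (rule approach[OF assms(6) pE x0(2) x0(1)])
      fix h :: "real^'n^'n" assume "h \<noteq> 0"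
      then show "\<exists>\<gamma>\<in>G. h *v (\<gamma> *v x0) \<noteq> 0" by (rule irred_gamma[OF np x0(1)])
    qed
  qed
  show ?thesis using P1 P2 by blast
qed

end
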